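(* Let $n\ge3$, $\mathfrak{g}=sl_{2n}(\mathbb{C})$, and let $\hat{\mathfrak{g}}$, $\hat e_i,\hat f_i$ and $\hat{\mathfrak{g}}_{fp}$ be as in the context. There is an associative algebra homomorphism $\phi:\mathcal{U}(\mathrm{gim}(M_n))\to\mathcal{U}(\hat{\mathfrak{g}}_{fp})$ with $\phi(e_i)=\hat e_i$ and $\phi(f_i)=\hat f_i$ for $1\le i\le n$; moreover it induces a Lie algebra homomorphism $\phi:\mathrm{gim}(M_n)\to\hat{\mathfrak{g}}_{fp}$ with $e_i\mapsto\hat e_i$, $f_i\mapsto\hat f_i$.
   Context: $\mathcal U$ denotes universal enveloping algebra. For $n\geq 3$, $M_n=(m_{i,j})$ is the $n\times n$ integer matrix with $m_{i,i}=2$, $m_{i,i+1}=m_{i+1,i}=-1$ ($1\le i\le n-1$), $m_{1,n}=m_{n,1}=1$, all other entries $0$. $\mathrm{gim}(M_n)$ is the complex Lie algebra generated by $e_i,f_i,h_i$ ($1\le i\le n$) with relations: (R1) $[h_i,e_j]=m_{i,j}e_j$, $[h_i,f_j]=-m_{i,j}f_j$, $[e_i,f_i]=h_i$ for all $i,j$; (R2) for $i\ne j$ with $m_{i,j}\le0$: $[e_i,f_j]=0=[f_i,e_j]$, $(\mathrm{ad}\,e_i)^{1-m_{i,j}}e_j=0=(\mathrm{ad}\,f_i)^{1-m_{i,j}}f_j$; (R3) for $i\ne j$ with $m_{i,j}>0$: $[e_i,e_j]=0=[f_i,f_j]$, $(\mathrm{ad}\,e_i)^{m_{i,j}+1}f_j=0=(\mathrm{ad}\,f_i)^{m_{i,j}+1}e_j$.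 The affine Lie algebra $\hat{\mathfrak{g}}=\mathfrak{g}\otimes\mathbb{C}[t,t^{-1}]\oplus\mathbb{C}c$ has bracket $[c,\hat{\mathfrak g}]=0$, $[x\otimes t^m,y\otimes t^k]=[x,y]\otimes t^{m+k}+m\delta_{m,-k}(x,y)c$, where $(\cdot,\cdot)$ is a nonzero scalar multiple of the Killing form. Let $\alpha_1,\dots,\alpha_{2n-1}$ be simple roots of $\mathfrak g$ (type $A_{2n-1}$, labeled along the chain), $\alpha^\flat=\alpha_1+\cdots+\alpha_{2n-1}$, and $\{E_\alpha,H_i\}$ a Chevalley basis of $\mathfrak g$. Set, for $1\le i\le n-1$, $\hat e_i=E_{\alpha_i}\otimes1-E_{-\alpha_{n+i}}\otimes1$, $\hat f_i=E_{-\alpha_i}\otimes1-E_{\alpha_{n+i}}\otimes1$, and $\hat e_n=E_{\alpha_n}\otimes1+E_{\alpha^\flat}\otimes t^{-1}$, $\hat f_n=E_{-\alpha_n}\otimes1+E_{-\alpha^\flat}\otimes t$. $\hat{\mathfrak g}_{fp}$ is the Lie subalgebra of $\hat{\mathfrak g}$ generated by $\hat e_i,\hat f_i$ ($1\le i\le n$). *)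

theory Defs
  imports Complex_Main
begin

text \<open>An element of the free associative algebra C<X> on generators of type 'g is a
  finitely supported function from words (lists of generators) to C.\<close>

type_synonym 'g fa = "'g list \<Rightarrow> complex"

definition FA :: "'g set \<Rightarrow> 'g fa set" where
  "FA S = {p. finite {w. p w \<noteq> 0} \<and> (\<forall>w. p w \<noteq> 0 \<longrightarrow> set w \<subseteq> S)}"

definition fa_zero :: "'g fa" where "fa_zero = (\<lambda>w. 0)"
definition fa_one :: "'g fa" where "fa_one = (\<lambda>w. if w = [] then 1 else 0)"
definition fa_gen :: "'g \<Rightarrow> 'g fa" where "fa_gen g = (\<lambda>w. if w = [g] then 1 else 0)"
definition fa_add :: "'g fa \<Rightarrow> 'g fa \<Rightarrow> 'g fa" where "fa_add p q = (\<lambda>w. p w + q w)"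
definition fa_sub :: "'g fa \<Rightarrow> 'g fa \<Rightarrow> 'g fa" where "fa_sub p q = (\<lambda>w. p w - q w)"
definition fa_smul :: "complex \<Rightarrow> 'g fa \<Rightarrow> 'g fa" where "fa_smul a p = (\<lambda>w. a * p w)"
definition fa_mul :: "'g fa \<Rightarrow> 'g fa \<Rightarrow> 'g fa" where
  "fa_mul p q = (\<lambda>w. \<Sum>k\<le>length w. p (take k w) * q (drop k w))"
definition fa_comm :: "'g fa \<Rightarrow> 'g fa \<Rightarrow> 'g fa" where
  "fa_comm p q = fa_sub (fa_mul p q) (fa_mul q p)"

inductive_set fa_ideal :: "'g fa set \<Rightarrow> 'g fa set \<Rightarrow> 'g fa set" for A R where
  gen: "r \<in> R \<Longrightarrow> r \<in> fa_ideal A R"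
| zero: "fa_zero \<in> fa_ideal A R"
| add: "x \<in> fa_ideal A R \<Longrightarrow> y \<in> fa_ideal A R \<Longrightarrow> fa_add x y \<in> fa_ideal A R"
| smul: "x \<in> fa_ideal A R \<Longrightarrow> fa_smul a x \<in> fa_ideal A R"
| lmul: "x \<in> fa_ideal A R \<Longrightarrow> p \<in> A \<Longrightarrow> fa_mul p x \<in> fa_ideal A R"
| rmul: "x \<in> fa_ideal A R \<Longrightarrow> p \<in> A \<Longrightarrow> fa_mul x p \<in> fa_ideal A R"

text \<open>Lie subalgebra (w.r.t. the commutator bracket) generated by S: the free Lie algebra
  on S when S is a set of free generators.\<close>
inductive_set fa_lie_span :: "'g fa set \<Rightarrow> 'g fa set" for S where
  gen: "s \<in> S \<Longrightarrow> s \<in> fa_lie_span S"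
| add: "x \<in> fa_lie_span S \<Longrightarrow> y \<in> fa_lie_span S \<Longrightarrow> fa_add x y \<in> fa_lie_span S"
| smul: "x \<in> fa_lie_span S \<Longrightarrow> fa_smul a x \<in> fa_lie_span S"
| comm: "x \<in> fa_lie_span S \<Longrightarrow> y \<in> fa_lie_span S \<Longrightarrow> fa_comm x y \<in> fa_lie_span S"

inductive_set fa_lie_ideal :: "'g fa set \<Rightarrow> 'g fa set \<Rightarrow> 'g fa set" for L R where
  gen: "r \<in> R \<Longrightarrow> r \<in> fa_lie_ideal L R"
| zero: "fa_zero \<in> fa_lie_ideal L R"
| add: "x \<in> fa_lie_ideal L R \<Longrightarrow> y \<in> fa_lie_ideal L R \<Longrightarrow> fa_add x y \<in> fa_lie_ideal L R"
| smul: "x \<in> fa_lie_ideal L R \<Longrightarrow> fa_smul a x \<in> fa_lie_ideal L R"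
| comm: "z \<in> L \<Longrightarrow> x \<in> fa_lie_ideal L R \<Longrightarrow> fa_comm z x \<in> fa_lie_ideal L R"

definition fa_ad_pow :: "nat \<Rightarrow> 'g fa \<Rightarrow> 'g fa \<Rightarrow> 'g fa" where
  "fa_ad_pow k x y = ((fa_comm x) ^^ k) y"

datatype gimgen = GE nat | GF nat | GH nat

definition Mn :: "nat \<Rightarrow> nat \<Rightarrow> nat \<Rightarrow> int" where
  "Mn n i j = (if i = j then 2
     else if j = i + 1 \<or> i = j + 1 then -1
     else if (i = 1 \<and> j = n) \<or> (i = n \<and> j = 1) then 1 else 0)"

definition gim_gens :: "nat \<Rightarrow> gimgen set" where
  "gim_gens n = {GE i | i. 1 \<le> i \<and> i \<le> n} \<union> {GF i | i. 1 \<le> i \<and> i \<le> n} \<union> {GH i | i. 1 \<le> i \<and> i \<le> n}"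

abbreviation "ge i \<equiv> fa_gen (GE i)"
abbreviation "gf i \<equiv> fa_gen (GF i)"
abbreviation "gh i \<equiv> fa_gen (GH i)"

text \<open>The defining relations (R1)-(R3), each written as an element r meaning r = 0,
  with brackets interpreted as commutators.\<close>
definition gim_rels :: "nat \<Rightarrow> gimgen fa set" where
  "gim_rels n =
     {fa_sub (fa_comm (gh i) (ge j)) (fa_smul (of_int (Mn n i j)) (ge j)) | i j.
        i \<in> {1..n} \<and> j \<in> {1..n}}
   \<union> {fa_add (fa_comm (gh i) (gf j)) (fa_smul (of_int (Mn n i j)) (gf j)) | i j.
        i \<in> {1..n} \<and> j \<in> {1..n}}
   \<union> {fa_sub (fa_comm (ge i) (gf i)) (gh i) | i. i \<in> {1..n}}
   \<union> {r | r i j. i \<in> {1..n} \<and> j \<in> {1..n} \<and> i \<noteq> j \<and> Mn n i j \<le> 0 \<and>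
        r \<in> {fa_comm (ge i) (gf j), fa_comm (gf i) (ge j),
             fa_ad_pow (nat (1 - Mn n i j)) (ge i) (ge j),
             fa_ad_pow (nat (1 - Mn n i j)) (gf i) (gf j)}}
   \<union> {r | r i j. i \<in> {1..n} \<and> j \<in> {1..n} \<and> i \<noteq> j \<and> Mn n i j > 0 \<and>
        r \<in> {fa_comm (ge i) (ge j), fa_comm (gf i) (gf j),
             fa_ad_pow (nat (Mn n i j + 1)) (ge i) (gf j),
             fa_ad_pow (nat (Mn n i j + 1)) (gf i) (ge j)}}"

text \<open>Free Lie algebra on the generators e_i, f_i, h_i (inside the free associative algebra)
  and the Lie ideal generated by the relations; gim(M_n) = gim_FL n / gim_I n.\<close>
definition gim_FL :: "nat \<Rightarrow> gimgen fa set" where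
  "gim_FL n = fa_lie_span (fa_gen ` gim_gens n)"

definition gim_I :: "nat \<Rightarrow> gimgen fa set" where
  "gim_I n = fa_lie_ideal (gim_FL n) (gim_rels n)"

text \<open>U(gim(M_n)) = FA (gim_gens n) / gim_J n (free associative algebra modulo the
  two-sided ideal generated by the relations).\<close>
definition gim_J :: "nat \<Rightarrow> gimgen fa set" where
  "gim_J n = fa_ideal (FA (gim_gens n)) (gim_rels n)"

text \<open>Matrices are functions nat => nat => complex; only entries with indices < N matter
  (N = 2n). Matrix units use 0-based indices.\<close>
type_synonym mat = "nat \<Rightarrow> nat \<Rightarrow> complex"

definition munit :: "nat \<Rightarrow> nat \<Rightarrow> mat" where
  "munit i j = (\<lambda>a b. if a = i \<and> b = j then 1 else 0)"
definition madd :: "mat \<Rightarrow> mat \<Rightarrow> mat" where "madd A B = (\<lambda>a b. A a b + B a b)"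
definition msub :: "mat \<Rightarrow> mat \<Rightarrow> mat" where "msub A B = (\<lambda>a b. A a b - B a b)"
definition mmul :: "nat \<Rightarrow> mat \<Rightarrow> mat \<Rightarrow> mat" where
  "mmul N A B = (\<lambda>a b. \<Sum>k<N. A a k * B k b)"
definition mbr :: "nat \<Rightarrow> mat \<Rightarrow> mat \<Rightarrow> mat" where
  "mbr N A B = msub (mmul N A B) (mmul N B A)"
definition mtr :: "nat \<Rightarrow> mat \<Rightarrow> complex" where
  "mtr N A = (\<Sum>a<N. A a a)"

text \<open>Element of the affine algebra: (X, c) standing for sum_m X m (x) t^m + c c,
  with X finitely supported.\<close>
type_synonym aff = "(int \<Rightarrow> mat) \<times> complex"

definition asupp :: "(int \<Rightarrow> mat) \<Rightarrow> int set" where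
  "asupp X = {m. X m \<noteq> (\<lambda>a b. 0)}"

definition aff_add :: "aff \<Rightarrow> aff \<Rightarrow> aff" where
  "aff_add x y = ((\<lambda>m. madd (fst x m) (fst y m)), snd x + snd y)"
definition aff_smul :: "complex \<Rightarrow> aff \<Rightarrow> aff" where
  "aff_smul s x = ((\<lambda>m a b. s * fst x m a b), s * snd x)"

text \<open>Bracket: [x t^m, y t^k] = [x,y] t^(m+k) + m delta_(m,-k) (x,y) c,
  where (x,y) = kappa * tr(xy) (a nonzero multiple of the Killing form of sl_N).\<close>
definition aff_br :: "nat \<Rightarrow> complex \<Rightarrow> aff \<Rightarrow> aff \<Rightarrow> aff" where
  "aff_br N \<kappa> x y =
     ((\<lambda>k. \<lambda>a b. \<Sum>m\<in>asupp (fst x). mbr N (fst x m) (fst y (k - m)) a b),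
      (\<Sum>m\<in>asupp (fst x). of_int m * \<kappa> * mtr N (mmul N (fst x m) (fst y (- m)))))"

definition aff_single :: "int \<Rightarrow> mat \<Rightarrow> aff" where
  "aff_single m A = ((\<lambda>k. if k = m then A else (\<lambda>a b. 0)), 0)"

text \<open>Simple roots alpha_1..alpha_(2n-1): E_(alpha_i) = munit (i-1) i,
  E_(-alpha_i) = munit i (i-1); E_(alpha^flat) = munit 0 (2n-1).\<close>
definition Epos :: "nat \<Rightarrow> mat" where "Epos i = munit (i - 1) i"
definition Eneg :: "nat \<Rightarrow> mat" where "Eneg i = munit i (i - 1)"

definition hat_e :: "nat \<Rightarrow> nat \<Rightarrow> aff" where
  "hat_e n i = (if i = n
     then aff_add (aff_single 0 (Epos n)) (aff_single (-1) (munit 0 (2*n - 1)))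
     else aff_single 0 (msub (Epos i) (Eneg (n + i))))"

definition hat_f :: "nat \<Rightarrow> nat \<Rightarrow> aff" where
  "hat_f n i = (if i = n
     then aff_add (aff_single 0 (Eneg n)) (aff_single 1 (munit (2*n - 1) 0))
     else aff_single 0 (msub (Eneg i) (Epos (n + i))))"

inductive_set aff_lie_span :: "nat \<Rightarrow> complex \<Rightarrow> aff set \<Rightarrow> aff set" for N \<kappa> S where
  gen: "s \<in> S \<Longrightarrow> s \<in> aff_lie_span N \<kappa> S"
| add: "x \<in> aff_lie_span N \<kappa> S \<Longrightarrow> y \<in> aff_lie_span N \<kappa> S \<Longrightarrow> aff_add x y \<in> aff_lie_span N \<kappa> S"
| smul: "x \<in> aff_lie_span N \<kappa> S \<Longrightarrow> aff_smul a x \<in> aff_lie_span N \<kappa> S"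
| br: "x \<in> aff_lie_span N \<kappa> S \<Longrightarrow> y \<in> aff_lie_span N \<kappa> S \<Longrightarrow> aff_br N \<kappa> x y \<in> aff_lie_span N \<kappa> S"

definition g_fp :: "nat \<Rightarrow> complex \<Rightarrow> aff set" where
  "g_fp n \<kappa> = aff_lie_span (2*n) \<kappa> ({hat_e n i | i. 1 \<le> i \<and> i \<le> n} \<union> {hat_f n i | i. 1 \<le> i \<and> i \<le> n})"

text \<open>U(hat g_fp) = FA (g_fp) / U_fp_K (tensor algebra of g_fp, i.e. free algebra on the
  set g_fp modulo linearity, modulo x y - y x - [x,y]).\<close>
definition U_fp_K :: "nat \<Rightarrow> complex \<Rightarrow> aff fa set" where
  "U_fp_K n \<kappa> = fa_ideal (FA (g_fp n \<kappa>))
     ({fa_sub (fa_gen (aff_add x y)) (fa_add (fa_gen x) (fa_gen y)) | x y.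
          x \<in> g_fp n \<kappa> \<and> y \<in> g_fp n \<kappa>}
    \<union> {fa_sub (fa_gen (aff_smul a x)) (fa_smul a (fa_gen x)) | a x. x \<in> g_fp n \<kappa>}
    \<union> {fa_sub (fa_comm (fa_gen x) (fa_gen y)) (fa_gen (aff_br (2*n) \<kappa> x y)) | x y.
          x \<in> g_fp n \<kappa> \<and> y \<in> g_fp n \<kappa>})"

text \<open>Phi (on representatives) induces a unital associative algebra homomorphism
  A/J -> B/K.\<close>
definition assoc_hom_quot :: "'g fa set \<Rightarrow> 'g fa set \<Rightarrow> 'h fa set \<Rightarrow> 'h fa set \<Rightarrow> ('g fa \<Rightarrow> 'h fa) \<Rightarrow> bool" where
  "assoc_hom_quot A J B K \<Phi> \<longleftrightarrow>
     (\<forall>p\<in>A. \<Phi> p \<in> B) \<and>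
     (\<forall>p\<in>J. \<Phi> p \<in> K) \<and>
     (\<forall>p\<in>A. \<forall>q\<in>A. fa_sub (\<Phi> (fa_add p q)) (fa_add (\<Phi> p) (\<Phi> q)) \<in> K) \<and>
     (\<forall>a. \<forall>p\<in>A. fa_sub (\<Phi> (fa_smul a p)) (fa_smul a (\<Phi> p)) \<in> K) \<and>
     (\<forall>p\<in>A. \<forall>q\<in>A. fa_sub (\<Phi> (fa_mul p q)) (fa_mul (\<Phi> p) (\<Phi> q)) \<in> K) \<and>
     fa_sub (\<Phi> fa_one) fa_one \<in> K"

text \<open>psi induces a Lie algebra homomorphism L/I -> hat g (N, kappa).\<close>
definition lie_hom_quot :: "'g fa set \<Rightarrow> 'g fa set \<Rightarrow> nat \<Rightarrow> complex \<Rightarrow> ('g fa \<Rightarrow> aff) \<Rightarrow> bool" where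
  "lie_hom_quot L I N \<kappa> \<psi> \<longleftrightarrow>
     (\<forall>x\<in>L. \<forall>y\<in>L. \<psi> (fa_add x y) = aff_add (\<psi> x) (\<psi> y)) \<and>
     (\<forall>a. \<forall>x\<in>L. \<psi> (fa_smul a x) = aff_smul a (\<psi> x)) \<and>
     (\<forall>x\<in>L. \<forall>y\<in>L. \<psi> (fa_comm x y) = aff_br N \<kappa> (\<psi> x) (\<psi> y)) \<and>
     (\<forall>x\<in>I. \<psi> x = ((\<lambda>m a b. 0), 0))"

end

theory Submission
  imports Defs
begin

definition supp :: "'g fa \<Rightarrow> 'g list set" where "supp p = {w. p w \<noteq> 0}"

definition lin :: "'g fa \<Rightarrow> ('g list \<Rightarrow> complex) \<Rightarrow> complex" where
  "lin p G = (\<Sum>w\<in>supp p. p w * G w)"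

lemma lin_superset:
  assumes "finite S" "supp p \<subseteq> S"
  shows "lin p G = (\<Sum>w\<in>S. p w * G w)"
  unfolding lin_def
  by (rule sum.mono_neutral_left) (use assms in \<open>auto simp: supp_def\<close>)

lemma supp_add: "supp (fa_add p q) \<subseteq> supp p \<union> supp q"
  by (auto simp: supp_def fa_add_def)
lemma supp_sub: "supp (fa_sub p q) \<subseteq> supp p \<union> supp q"
  by (auto simp: supp_def fa_sub_def)
lemma supp_smul: "supp (fa_smul a p) \<subseteq> supp p"
  by (auto simp: supp_def fa_smul_def)
lemma supp_gen: "supp (fa_gen g) = {[g]}"
  by (auto simp: supp_def fa_gen_def)
lemma supp_one: "supp fa_one = {[]}"
  by (auto simp: supp_def fa_one_def)
lemma supp_zero: "supp fa_zero = {}"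
  by (auto simp: supp_def fa_zero_def)

lemma supp_mul: "supp (fa_mul p q) \<subseteq> (\<lambda>(u,v). u @ v) ` (supp p \<times> supp q)"
proof
  fix w assume "w \<in> supp (fa_mul p q)"
  then have "(\<Sum>k\<le>length w. p (take k w) * q (drop k w)) \<noteq> 0"
    by (simp add: supp_def fa_mul_def)
  then obtain k where "p (take k w) * q (drop k w) \<noteq> 0"
    by (meson sum.not_neutral_contains_not_neutral)
  then show "w \<in> (\<lambda>(u,v). u @ v) ` (supp p \<times> supp q)"
    by (auto simp: supp_def intro!: image_eqI[where x="(take k w, drop k w)"])
qed

lemma finite_supp_mul: "finite (supp p) \<Longrightarrow> finite (supp q) \<Longrightarrow> finite (supp (fa_mul p q))"
  by (rule finite_subset[OF supp_mul]) auto

lemma lin_add: assumes "finite (supp p)" "finite (supp q)"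
  shows "lin (fa_add p q) G = lin p G + lin q G"
proof -
  let ?S = "supp p \<union> supp q"
  have "lin (fa_add p q) G = (\<Sum>w\<in>?S. fa_add p q w * G w)"
    by (rule lin_superset) (use assms supp_add in auto)
  also have "\<dots> = (\<Sum>w\<in>?S. p w * G w) + (\<Sum>w\<in>?S. q w * G w)"
    by (simp add: fa_add_def distrib_right sum.distrib)
  also have "\<dots> = lin p G + lin q G"
    using assms by (simp add: lin_superset[of ?S])
  finally show ?thesis .
qed

lemma lin_smul: assumes "finite (supp p)"
  shows "lin (fa_smul a p) G = a * lin p G"
proof -
  have "lin (fa_smul a p) G = (\<Sum>w\<in>supp p. fa_smul a p w * G w)"
    by (rule lin_superset) (use assms supp_smul in auto)
  then show ?thesis by (simp add: lin_def fa_smul_def sum_distrib_left mult.assoc)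
qed

lemma lin_sub: assumes "finite (supp p)" "finite (supp q)"
  shows "lin (fa_sub p q) G = lin p G - lin q G"
proof -
  let ?S = "supp p \<union> supp q"
  have "lin (fa_sub p q) G = (\<Sum>w\<in>?S. fa_sub p q w * G w)"
    by (rule lin_superset) (use assms supp_sub in auto)
  also have "\<dots> = (\<Sum>w\<in>?S. p w * G w) - (\<Sum>w\<in>?S. q w * G w)"
    by (simp add: fa_sub_def left_diff_distrib sum_subtractf)
  also have "\<dots> = lin p G - lin q G"
    using assms by (simp add: lin_superset[of ?S])
  finally show ?thesis .
qed

lemma lin_gen: "lin (fa_gen g) G = G [g]"
  unfolding lin_def supp_gen by (simp add: fa_gen_def)
lemma lin_one: "lin fa_one G = G []"
  unfolding lin_def supp_one by (simp add: fa_one_def)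
lemma lin_zero: "lin fa_zero G = 0"
  by (simp add: lin_def supp_zero)

lemma lin_cong: "(\<And>w. w \<in> supp p \<Longrightarrow> G w = H w) \<Longrightarrow> lin p G = lin p H"
  unfolding lin_def by (rule sum.cong) auto

lemma sum_swap3: "(\<Sum>k\<in>K. \<Sum>u\<in>U. \<Sum>v\<in>V. f k u v) = (\<Sum>u\<in>U. \<Sum>v\<in>V. \<Sum>k\<in>K. f k u v)"
  by (subst sum.swap, rule sum.cong[OF refl], rule sum.swap)

lemma sum_split_delta:
  "(\<Sum>k\<le>length w. if take k w = u \<and> drop k w = v then c else 0) = (if w = u @ v then c else 0)"
proof (cases "w = u @ v")
  case True
  have "(\<Sum>k\<le>length w. if take k w = u \<and> drop k w = v then c else 0)
      = (\<Sum>k\<le>length w. if k = length u then c else 0)"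
  proof (rule sum.cong[OF refl])
    fix k assume "k \<in> {..length w}"
    then have kw: "k \<le> length w" by simp
    have "(take k w = u \<and> drop k w = v) = (k = length u)"
    proof
      assume "take k w = u \<and> drop k w = v"
      then show "k = length u" using kw by (metis length_take min.absorb2)
    qed (simp add: True)
    then show "(if take k w = u \<and> drop k w = v then c else 0) = (if k = length u then c else 0)" by simp
  qed
  then show ?thesis using True by simp
next
  case False
  then show ?thesis by (auto intro!: sum.neutral)
qed

lemma lin_conv:
  assumes fp: "finite (supp p)" and fq: "finite (supp q)"
  shows "lin (fa_mul p q) G = (\<Sum>u\<in>supp p. \<Sum>v\<in>supp q. p u * q v * G (u @ v))"
proof -
  let ?C = "(\<lambda>(u,v). u @ v) ` (supp p \<times> supp q)"
  have fC: "finite ?C" using fp fq by auto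
  have ep: "p x = (\<Sum>u\<in>supp p. if u = x then p u else 0)" for x
    using fp by (auto simp: supp_def)
  have eq: "q x = (\<Sum>v\<in>supp q. if v = x then q v else 0)" for x
    using fq by (auto simp: supp_def)
  have "lin (fa_mul p q) G = (\<Sum>w\<in>?C. fa_mul p q w * G w)"
    by (rule lin_superset[OF fC supp_mul])
  also have "\<dots> = (\<Sum>w\<in>?C. \<Sum>k\<le>length w. \<Sum>u\<in>supp p. \<Sum>v\<in>supp q.
      (if take k w = u \<and> drop k w = v then p u * q v * G w else 0))"
    apply (rule sum.cong[OF refl])
    apply (simp add: fa_mul_def sum_distrib_right)
    apply (rule sum.cong[OF refl])
    apply (subst ep, subst eq)
    apply (simp add: sum_distrib_left sum_distrib_right)
    apply (subst sum.swap)
    apply (rule sum.cong[OF refl])+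
    apply auto
    done
  also have "\<dots> = (\<Sum>w\<in>?C. \<Sum>u\<in>supp p. \<Sum>v\<in>supp q. \<Sum>k\<le>length w.
      (if take k w = u \<and> drop k w = v then p u * q v * G w else 0))"
    by (rule sum.cong[OF refl], rule sum_swap3)
  also have "\<dots> = (\<Sum>u\<in>supp p. \<Sum>v\<in>supp q. \<Sum>w\<in>?C. \<Sum>k\<le>length w.
      (if take k w = u \<and> drop k w = v then p u * q v * G w else 0))"
    by (rule sum_swap3)
  also have "\<dots> = (\<Sum>u\<in>supp p. \<Sum>v\<in>supp q. p u * q v * G (u @ v))"
  proof (rule sum.cong[OF refl], rule sum.cong[OF refl])
    fix u v assume uv: "u \<in> supp p" "v \<in> supp q"
    have "(\<Sum>w\<in>?C. \<Sum>k\<le>length w. (if take k w = u \<and> drop k w = v then p u * q v * G w else 0))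
        = (\<Sum>w\<in>?C. if w = u @ v then p u * q v * G w else 0)"
      by (rule sum.cong[OF refl], rule sum_split_delta)
    also have "\<dots> = p u * q v * G (u @ v)"
    proof -
      have "u @ v \<in> ?C" using uv by (auto intro!: image_eqI[of _ _ "(u,v)"])
      then show ?thesis by (simp add: sum.delta' fC)
    qed
    finally show "(\<Sum>w\<in>?C. \<Sum>k\<le>length w. (if take k w = u \<and> drop k w = v then p u * q v * G w else 0))
        = p u * q v * G (u @ v)" .
  qed
  finally show ?thesis .
qed


type_synonym lm = "int \<Rightarrow> mat"

definition lmul :: "nat \<Rightarrow> lm \<Rightarrow> lm \<Rightarrow> lm" where
  "lmul N X Y = (\<lambda>k a b. \<Sum>m\<in>asupp X. mmul N (X m) (Y (k - m)) a b)"

lemma asupp_iff: "m \<notin> asupp X \<longleftrightarrow> (\<forall>a b. X m a b = 0)"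
  by (auto simp: asupp_def fun_eq_iff)

lemma lmul_sup:
  assumes "finite S" "asupp X \<subseteq> S"
  shows "lmul N X Y k a b = (\<Sum>m\<in>S. \<Sum>c<N. X m a c * Y (k - m) c b)"
  unfolding lmul_def mmul_def
  by (rule sum.mono_neutral_left) (use assms in \<open>auto simp: asupp_iff\<close>)

definition sumset :: "int set \<Rightarrow> int set \<Rightarrow> int set" where
  "sumset A B = (\<lambda>(x,y). x + y) ` (A \<times> B)"

lemma finite_sumset: "finite A \<Longrightarrow> finite B \<Longrightarrow> finite (sumset A B)"
  by (simp add: sumset_def)

lemma asupp_lmul: assumes "finite (asupp X)"
  shows "asupp (lmul N X Y) \<subseteq> sumset (asupp X) (asupp Y)"
proof
  fix k assume k: "k \<in> asupp (lmul N X Y)"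
  show "k \<in> sumset (asupp X) (asupp Y)"
  proof (rule ccontr)
    assume nk: "k \<notin> sumset (asupp X) (asupp Y)"
    have "lmul N X Y k a b = 0" for a b
      unfolding lmul_def
    proof (rule sum.neutral, rule ballI)
      fix m assume m: "m \<in> asupp X"
      then have "k - m \<notin> asupp Y" using nk
        by (auto simp: sumset_def intro!: image_eqI[of _ _ "(m, k - m)"])
      then show "mmul N (X m) (Y (k - m)) a b = 0" by (simp add: mmul_def asupp_iff)
    qed
    then show False using k by (auto simp: asupp_def fun_eq_iff)
  qed
qed

lemma fin_lmul: "finite (asupp X) \<Longrightarrow> finite (asupp Y) \<Longrightarrow> finite (asupp (lmul N X Y))"
  by (rule finite_subset[OF asupp_lmul]) (auto intro: finite_sumset)

lemma sum_swap4: "(\<Sum>p\<in>P. \<Sum>c\<in>C. \<Sum>m\<in>M. \<Sum>d\<in>D. f p c m d) = (\<Sum>m\<in>M. \<Sum>d\<in>D. \<Sum>p\<in>P. \<Sum>c\<in>C. f p c m d)"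
proof -
  have "(\<Sum>p\<in>P. \<Sum>c\<in>C. \<Sum>m\<in>M. \<Sum>d\<in>D. f p c m d) = (\<Sum>p\<in>P. \<Sum>m\<in>M. \<Sum>d\<in>D. \<Sum>c\<in>C. f p c m d)"
    by (rule sum.cong[OF refl], rule sum_swap3)
  also have "\<dots> = (\<Sum>m\<in>M. \<Sum>d\<in>D. \<Sum>p\<in>P. \<Sum>c\<in>C. f p c m d)"
    by (rule sum_swap3)
  finally show ?thesis .
qed

lemma sum_shift:
  fixes f :: "int \<Rightarrow> complex"
  shows "(\<Sum>p\<in>A. f p) = (\<Sum>q\<in>(\<lambda>p. p - m) ` A. f (q + m))"
proof -
  have "inj_on (\<lambda>q. q + m) ((\<lambda>p. p - m) ` A)" by (auto simp: inj_on_def)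
  moreover have "(\<lambda>q. q + m) ` ((\<lambda>p. p - m) ` A) = A" by (auto simp: image_image)
  ultimately show ?thesis using sum.reindex[of "\<lambda>q. q + m" "(\<lambda>p. p - m) ` A" f] by simp
qed

lemma lmul_assoc:
  assumes fX: "finite (asupp X)" and fY: "finite (asupp Y)"
  shows "lmul N (lmul N X Y) Z = lmul N X (lmul N Y Z)"
proof (intro ext)
  fix k a b
  let ?SX = "asupp X" and ?SY = "asupp Y"
  let ?SXY = "sumset ?SX ?SY"
  have fXY: "finite ?SXY" using fX fY by (rule finite_sumset)
  have "lmul N (lmul N X Y) Z k a b = (\<Sum>p\<in>?SXY. \<Sum>c<N. lmul N X Y p a c * Z (k - p) c b)"
    by (rule lmul_sup[OF fXY asupp_lmul[OF fX]])
  also have "\<dots> = (\<Sum>p\<in>?SXY. \<Sum>c<N. \<Sum>m\<in>?SX. \<Sum>d<N. X m a d * (Y (p - m) d c * Z (k - p) c b))"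
    by (simp add: lmul_sup[OF fX subset_refl] sum_distrib_right mult.assoc)
  also have "\<dots> = (\<Sum>m\<in>?SX. \<Sum>d<N. \<Sum>p\<in>?SXY. \<Sum>c<N. X m a d * (Y (p - m) d c * Z (k - p) c b))"
    by (rule sum_swap4)
  also have "\<dots> = (\<Sum>m\<in>?SX. \<Sum>d<N. X m a d * lmul N Y Z (k - m) d b)"
  proof (rule sum.cong[OF refl], rule sum.cong[OF refl])
    fix m d assume m: "m \<in> ?SX"
    have "(\<Sum>p\<in>?SXY. \<Sum>c<N. X m a d * (Y (p - m) d c * Z (k - p) c b))
        = X m a d * (\<Sum>p\<in>?SXY. \<Sum>c<N. Y (p - m) d c * Z (k - p) c b)"
      by (simp add: sum_distrib_left)
    also have "(\<Sum>p\<in>?SXY. \<Sum>c<N. Y (p - m) d c * Z (k - p) c b)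
        = (\<Sum>q\<in>(\<lambda>p. p - m) ` ?SXY. \<Sum>c<N. Y q d c * Z (k - m - q) c b)"
      by (subst sum_shift[of _ _ m]) (simp add: algebra_simps)
    also have "\<dots> = lmul N Y Z (k - m) d b"
    proof (rule lmul_sup[symmetric])
      show "finite ((\<lambda>p. p - m) ` ?SXY)" using fXY by simp
      show "?SY \<subseteq> (\<lambda>p. p - m) ` ?SXY"
      proof
        fix q assume "q \<in> ?SY"
        then have "m + q \<in> ?SXY" using m by (auto simp: sumset_def)
        then show "q \<in> (\<lambda>p. p - m) ` ?SXY" by (auto intro!: image_eqI[of _ _ "m + q"])
      qed
    qed
    finally show "(\<Sum>p\<in>?SXY. \<Sum>c<N. X m a d * (Y (p - m) d c * Z (k - p) c b))
        = X m a d * lmul N Y Z (k - m) d b" .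
  qed
  also have "\<dots> = lmul N X (lmul N Y Z) k a b"
    by (rule lmul_sup[OF fX subset_refl, symmetric])
  finally show "lmul N (lmul N X Y) Z k a b = lmul N X (lmul N Y Z) k a b" .
qed


definition lone :: "nat \<Rightarrow> lm" where
  "lone N = (\<lambda>k a b. if k = 0 \<and> a = b \<and> a < N then 1 else 0)"

definition bnd :: "nat \<Rightarrow> lm \<Rightarrow> bool" where
  "bnd N X \<longleftrightarrow> (\<forall>k a b. N \<le> a \<or> N \<le> b \<longrightarrow> X k a b = 0)"

lemma asupp_lone: "asupp (lone N) \<subseteq> {0}"
  by (auto simp: asupp_def lone_def fun_eq_iff)

lemma sum_supp_eq:
  assumes "finite A" "finite B" "\<And>x. g x \<noteq> 0 \<Longrightarrow> x \<in> A \<and> x \<in> B"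
  shows "sum g A = sum g B"
proof -
  have "sum g A = sum g (A \<inter> B)"
    by (rule sum.mono_neutral_right) (use assms in auto)
  also have "\<dots> = sum g B"
    by (rule sum.mono_neutral_left) (use assms in auto)
  finally show ?thesis .
qed

lemma lmul_lone_right:
  assumes fX: "finite (asupp X)" and bX: "bnd N X"
  shows "lmul N X (lone N) = X"
proof (intro ext)
  fix k a b
  have "lmul N X (lone N) k a b = (\<Sum>m\<in>asupp X. \<Sum>c<N. X m a c * lone N (k - m) c b)"
    by (rule lmul_sup[OF fX subset_refl])
  also have "\<dots> = (\<Sum>m\<in>asupp X. if m = k \<and> b < N then X m a b else 0)"
  proof (rule sum.cong[OF refl])
    fix m
    have "(\<Sum>c<N. X m a c * lone N (k - m) c b) = (\<Sum>c<N. if c = b then (if m = k \<and> b < N then X m a b else 0) else 0)"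
      by (rule sum.cong[OF refl]) (auto simp: lone_def)
    then show "(\<Sum>c<N. X m a c * lone N (k - m) c b) = (if m = k \<and> b < N then X m a b else 0)"
      by (simp add: sum.delta')
  qed
  also have "\<dots> = X k a b"
  proof (cases "b < N")
    case True
    then show ?thesis using fX by (auto simp: sum.delta' asupp_iff)
  next
    case False
    then show ?thesis using bX by (auto simp: bnd_def)
  qed
  finally show "lmul N X (lone N) k a b = X k a b" .
qed

lemma lmul_lone_left:
  assumes bY: "bnd N Y"
  shows "lmul N (lone N) Y = Y"
proof (intro ext)
  fix k a b
  have "lmul N (lone N) Y k a b = (\<Sum>m\<in>{0}. \<Sum>c<N. lone N m a c * Y (k - m) c b)"
    by (rule lmul_sup[OF _ asupp_lone]) simp
  also have "\<dots> = (\<Sum>c<N. lone N 0 a c * Y k c b)" by simp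
  also have "\<dots> = (\<Sum>c<N. if c = a then (if a < N then Y k a b else 0) else 0)"
    by (rule sum.cong[OF refl]) (simp add: lone_def)
  also have "\<dots> = (if a < N then Y k a b else 0)"
    by (simp add: sum.delta')
  also have "\<dots> = Y k a b" using bY by (auto simp: bnd_def)
  finally show "lmul N (lone N) Y k a b = Y k a b" .
qed

lemma bnd_lmul: "bnd N X \<Longrightarrow> bnd N Y \<Longrightarrow> bnd N (lmul N X Y)"
  by (auto simp: bnd_def lmul_def mmul_def)

lemma bnd_lone: "bnd N (lone N)"
  by (auto simp: bnd_def lone_def)

definition ldiff :: "lm \<Rightarrow> lm" where
  "ldiff X = (\<lambda>k a b. of_int k * X k a b)"

lemma asupp_ldiff: "asupp (ldiff X) \<subseteq> asupp X"
  by (auto simp: asupp_def ldiff_def fun_eq_iff)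

lemma fin_ldiff: "finite (asupp X) \<Longrightarrow> finite (asupp (ldiff X))"
  using asupp_ldiff finite_subset by blast

lemma ldiff_lmul:
  assumes fX: "finite (asupp X)"
  shows "ldiff (lmul N X Y) k a b = lmul N (ldiff X) Y k a b + lmul N X (ldiff Y) k a b"
proof -
  have "lmul N (ldiff X) Y k a b = (\<Sum>m\<in>asupp X. \<Sum>c<N. ldiff X m a c * Y (k - m) c b)"
    by (rule lmul_sup[OF fX asupp_ldiff])
  moreover have "lmul N X (ldiff Y) k a b = (\<Sum>m\<in>asupp X. \<Sum>c<N. X m a c * ldiff Y (k - m) c b)"
    by (rule lmul_sup[OF fX subset_refl])
  moreover have "lmul N X Y k a b = (\<Sum>m\<in>asupp X. \<Sum>c<N. X m a c * Y (k - m) c b)"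
    by (rule lmul_sup[OF fX subset_refl])
  ultimately show ?thesis
    by (simp add: ldiff_def sum_distrib_left sum.distrib[symmetric] algebra_simps)
qed

definition ltr :: "nat \<Rightarrow> lm \<Rightarrow> complex" where
  "ltr N X = mtr N (X 0)"

lemma ltr_ldiff: "ltr N (ldiff X) = 0"
  by (simp add: ltr_def ldiff_def mtr_def)

lemma ltr_cyclic:
  assumes fX: "finite (asupp X)" and fY: "finite (asupp Y)"
  shows "ltr N (lmul N X Y) = ltr N (lmul N Y X)"
proof -
  let ?S = "asupp X \<union> uminus ` asupp Y"
  have fS: "finite ?S" using fX fY by simp
  have "ltr N (lmul N Y X) = (\<Sum>a<N. \<Sum>l\<in>uminus ` ?S. \<Sum>c<N. Y l a c * X (0 - l) c a)"
    unfolding ltr_def mtr_def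
  proof (rule sum.cong[OF refl], rule lmul_sup)
    show "finite (uminus ` ?S)" using fS by simp
    have "asupp Y = uminus ` uminus ` asupp Y" by (simp add: image_image)
    then show "asupp Y \<subseteq> uminus ` ?S" by blast
  qed
  also have "\<dots> = (\<Sum>a<N. \<Sum>m\<in>?S. \<Sum>c<N. Y (- m) a c * X m c a)"
    by (rule sum.cong[OF refl], subst sum.reindex) (auto simp: inj_on_def)
  also have "\<dots> = (\<Sum>m\<in>?S. \<Sum>a<N. \<Sum>c<N. Y (- m) a c * X m c a)"
    by (rule sum.swap)
  also have "\<dots> = (\<Sum>m\<in>?S. \<Sum>c<N. \<Sum>a<N. X m c a * Y (0 - m) a c)"
    by (rule sum.cong[OF refl], subst sum.swap) (simp add: mult.commute)
  also have "\<dots> = (\<Sum>c<N. \<Sum>m\<in>?S. \<Sum>a<N. X m c a * Y (0 - m) a c)"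
    by (rule sum.swap)
  also have "\<dots> = ltr N (lmul N X Y)"
    unfolding ltr_def mtr_def
    by (rule sum.cong[OF refl], rule lmul_sup[symmetric]) (use fS in auto)
  finally show ?thesis by simp
qed

lemma asupp_mem: "X m a b \<noteq> 0 \<Longrightarrow> m \<in> asupp X"
  using asupp_iff by blast

lemma lmul_rev:
  assumes "finite S" "asupp X \<subseteq> S" and fY: "finite (asupp Y)"
  shows "(\<Sum>m\<in>S. mmul N (Y (k - m)) (X m) a b) = lmul N Y X k a b"
proof -
  let ?g = "\<lambda>l. \<Sum>c<N. Y l a c * X (k - l) c b"
  have "(\<Sum>m\<in>S. mmul N (Y (k - m)) (X m) a b) = (\<Sum>m\<in>S. ?g (k - m))"
    by (simp add: mmul_def)
  also have "\<dots> = (\<Sum>l\<in>(\<lambda>m. k - m) ` S. ?g l)"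
  proof -
    have "inj_on (\<lambda>m. k - m) S" by (simp add: inj_on_def)
    then show ?thesis by (simp add: sum.reindex o_def)
  qed
  also have "\<dots> = (\<Sum>l\<in>asupp Y. ?g l)"
  proof (rule sum_supp_eq)
    show "finite ((\<lambda>m. k - m) ` S)" using assms by simp
    show "finite (asupp Y)" by fact
    fix l assume "?g l \<noteq> 0"
    then obtain c where "Y l a c * X (k - l) c b \<noteq> 0" by (meson sum.not_neutral_contains_not_neutral)
    then have "l \<in> asupp Y" "k - l \<in> asupp X" by (auto intro: asupp_mem)
    then show "l \<in> (\<lambda>m. k - m) ` S \<and> l \<in> asupp Y" using assms(2)
      by (auto intro!: image_eqI[of _ _ "k - l"])
  qed
  also have "\<dots> = lmul N Y X k a b"
    by (rule lmul_sup[symmetric]) (use fY in auto)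
  finally show ?thesis .
qed


lemma sum_split: fixes r s :: nat shows "(\<Sum>j<r+s. f j) = (\<Sum>j<r. f j) + (\<Sum>j<s. f (j + r))"
  by (induction s) (auto simp: add.commute add.left_commute)

definition om :: "nat \<Rightarrow> complex \<Rightarrow> lm \<Rightarrow> lm \<Rightarrow> complex" where
  "om N \<kappa> X Y = (\<Sum>m\<in>asupp X. of_int m * \<kappa> * mtr N (mmul N (X m) (Y (- m))))"

lemma om_sup: assumes "finite S" "asupp X \<subseteq> S"
  shows "om N \<kappa> X Y = (\<Sum>m\<in>S. of_int m * \<kappa> * mtr N (mmul N (X m) (Y (- m))))"
  unfolding om_def
  by (rule sum.mono_neutral_left) (use assms in \<open>auto simp: asupp_iff mtr_def mmul_def\<close>)

lemma om_ltr: assumes fX: "finite (asupp X)"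
  shows "om N \<kappa> X Y = \<kappa> * ltr N (lmul N (ldiff X) Y)"
proof -
  have "ltr N (lmul N (ldiff X) Y) = (\<Sum>a<N. \<Sum>m\<in>asupp X. \<Sum>c<N. ldiff X m a c * Y (0 - m) c a)"
    unfolding ltr_def mtr_def by (rule sum.cong[OF refl], rule lmul_sup[OF fX asupp_ldiff])
  also have "\<dots> = (\<Sum>m\<in>asupp X. \<Sum>a<N. \<Sum>c<N. ldiff X m a c * Y (0 - m) c a)"
    by (rule sum.swap)
  finally show ?thesis
    by (simp add: om_def ldiff_def mtr_def mmul_def sum_distrib_left algebra_simps)
qed

lemma bnd_ldiff: "bnd N X \<Longrightarrow> bnd N (ldiff X)"
  by (simp add: bnd_def ldiff_def)

lemma lmul_zero_left: "lmul N (\<lambda>k a b. 0) Y = (\<lambda>k a b. 0)"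
  by (simp add: lmul_def asupp_def)

lemma ltr_zero: "ltr N (\<lambda>k a b. 0) = 0" by (simp add: ltr_def mtr_def)

lemma lmul_sum_left:
  assumes "finite J" "\<And>j. j \<in> J \<Longrightarrow> finite (asupp (X j))"
  shows "lmul N (\<lambda>k a b. \<Sum>j\<in>J. X j k a b) Y k a b = (\<Sum>j\<in>J. lmul N (X j) Y k a b)"
proof -
  let ?S = "\<Union>j\<in>J. asupp (X j)"
  have fS: "finite ?S" using assms by auto
  have sub: "asupp (\<lambda>k a b. \<Sum>j\<in>J. X j k a b) \<subseteq> ?S"
  proof
    fix m assume "m \<in> asupp (\<lambda>k a b. \<Sum>j\<in>J. X j k a b)"
    then obtain a b where "(\<Sum>j\<in>J. X j m a b) \<noteq> 0" by (auto simp: asupp_def fun_eq_iff)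
    then obtain j where "j \<in> J" "X j m a b \<noteq> 0" by (meson sum.not_neutral_contains_not_neutral)
    then show "m \<in> ?S" by (auto intro: asupp_mem)
  qed
  have "lmul N (\<lambda>k a b. \<Sum>j\<in>J. X j k a b) Y k a b = (\<Sum>m\<in>?S. \<Sum>c<N. (\<Sum>j\<in>J. X j m a c) * Y (k - m) c b)"
    by (rule lmul_sup[OF fS sub])
  also have "\<dots> = (\<Sum>m\<in>?S. \<Sum>c<N. \<Sum>j\<in>J. X j m a c * Y (k - m) c b)"
    by (simp add: sum_distrib_right)
  also have "\<dots> = (\<Sum>j\<in>J. \<Sum>m\<in>?S. \<Sum>c<N. X j m a c * Y (k - m) c b)"
    by (rule sum_swap3[symmetric])
  also have "\<dots> = (\<Sum>j\<in>J. lmul N (X j) Y k a b)"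
    by (rule sum.cong[OF refl], rule lmul_sup[symmetric, OF fS]) auto
  finally show ?thesis .
qed

lemma lmul_sum_right:
  assumes "finite (asupp X)"
  shows "lmul N X (\<lambda>k a b. \<Sum>j\<in>J. Y j k a b) k a b = (\<Sum>j\<in>J. lmul N X (Y j) k a b)"
proof -
  have "lmul N X (\<lambda>k a b. \<Sum>j\<in>J. Y j k a b) k a b = (\<Sum>m\<in>asupp X. \<Sum>c<N. \<Sum>j\<in>J. X m a c * Y j (k - m) c b)"
    unfolding lmul_def mmul_def by (simp add: sum_distrib_left)
  also have "\<dots> = (\<Sum>j\<in>J. \<Sum>m\<in>asupp X. \<Sum>c<N. X m a c * Y j (k - m) c b)"
    by (rule sum_swap3[symmetric])
  finally show ?thesis unfolding lmul_def mmul_def by simp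
qed

lemma ltr_sum: "ltr N (\<lambda>k a b. \<Sum>j\<in>J. X j k a b) = (\<Sum>j\<in>J. ltr N (X j))"
  unfolding ltr_def mtr_def by (rule sum.swap)

lemma lmul_cong_left: "(\<And>k a b. X k a b = X' k a b) \<Longrightarrow> lmul N X Y = lmul N X' Y"
  by (metis ext)

locale LW =
  fixes N :: nat and \<kappa> :: complex and img :: "'g \<Rightarrow> lm" and c1 :: "'g \<Rightarrow> complex"
  assumes fimg: "finite (asupp (img g))" and bimg: "bnd N (img g)"
begin

definition P :: "'g list \<Rightarrow> lm" where
  "P w = foldr (\<lambda>g X. lmul N (img g) X) w (lone N)"

lemma P_Nil[simp]: "P [] = lone N" by (simp add: P_def)
lemma P_Cons[simp]: "P (g # w) = lmul N (img g) (P w)" by (simp add: P_def)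

lemma fin_P: "finite (asupp (P w))"
proof (induction w)
  case Nil then show ?case by (simp add: finite_subset[OF asupp_lone])
next
  case (Cons g w) then show ?case by (simp add: fin_lmul fimg)
qed

lemma bnd_P: "bnd N (P w)"
  by (induction w) (simp_all add: bnd_lone bnd_lmul bimg)

lemma P_append: "P (u @ v) = lmul N (P u) (P v)"
proof (induction u)
  case Nil then show ?case by (simp add: lmul_lone_left bnd_P)
next
  case (Cons g u) then show ?case by (simp add: lmul_assoc fimg fin_P)
qed

lemma P_single: "P [g] = img g"
  by (simp add: lmul_lone_right fimg bimg)

definition Q :: "'g list \<Rightarrow> nat \<Rightarrow> lm" where
  "Q w j = lmul N (lmul N (P (take j w)) (ldiff (img (w ! j)))) (P (drop (Suc j) w))"

lemma fin_Q: "finite (asupp (Q w j))"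
  unfolding Q_def by (intro fin_lmul fin_ldiff fin_P fimg)

lemma leibniz: "ldiff (P w) k a b = (\<Sum>j<length w. Q w j k a b)"
proof (induction w arbitrary: k a b)
  case Nil then show ?case by (simp add: ldiff_def lone_def)
next
  case (Cons g w)
  have "ldiff (P (g # w)) k a b = lmul N (ldiff (img g)) (P w) k a b + lmul N (img g) (ldiff (P w)) k a b"
    by (simp add: ldiff_lmul fimg)
  also have "lmul N (img g) (ldiff (P w)) k a b = (\<Sum>j<length w. lmul N (img g) (Q w j) k a b)"
  proof -
    have "ldiff (P w) = (\<lambda>k a b. \<Sum>j<length w. Q w j k a b)" using Cons by (intro ext)
    then show ?thesis by (simp add: lmul_sum_right fimg)
  qed
  also have "(\<Sum>j<length w. lmul N (img g) (Q w j) k a b) = (\<Sum>j<length w. Q (g # w) (Suc j) k a b)"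
    by (rule sum.cong[OF refl]) (simp add: Q_def lmul_assoc fimg fin_P fin_ldiff fin_lmul)
  also have "lmul N (ldiff (img g)) (P w) k a b = Q (g # w) 0 k a b"
    by (simp add: Q_def lmul_lone_left bnd_P bnd_lmul bnd_lone bnd_ldiff bimg)
  finally show ?case
    by (simp only: length_Cons sum.lessThan_Suc_shift)
qed

end


context LW begin

definition T :: "'g list \<Rightarrow> nat \<Rightarrow> complex" where
  "T w j = ltr N (Q w j)"

definition F :: "'g list \<Rightarrow> complex" where
  "F w = (if length w = 0 then 0 else if length w = 1 then c1 (hd w)
          else - (\<kappa> / of_nat (length w)) * (\<Sum>j<length w. of_nat j * T w j))"

lemma T_sum0: "(\<Sum>j<length w. T w j) = 0"
proof -
  have "ldiff (P w) = (\<lambda>k a b. \<Sum>j<length w. Q w j k a b)" by (intro ext) (rule leibniz)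
  then have "ltr N (ldiff (P w)) = (\<Sum>j<length w. ltr N (Q w j))" by (simp add: ltr_sum)
  then show ?thesis by (simp add: T_def ltr_ldiff)
qed

lemma om_P: "om N \<kappa> (P u) (P v) = \<kappa> * (\<Sum>j<length u. T (u @ v) j)"
proof -
  have "om N \<kappa> (P u) (P v) = \<kappa> * ltr N (lmul N (ldiff (P u)) (P v))"
    by (rule om_ltr[OF fin_P])
  also have "ldiff (P u) = (\<lambda>k a b. \<Sum>j<length u. Q u j k a b)" by (intro ext) (rule leibniz)
  also have "lmul N (\<lambda>k a b. \<Sum>j<length u. Q u j k a b) (P v) = (\<lambda>k a b. \<Sum>j<length u. lmul N (Q u j) (P v) k a b)"
    by (intro ext, rule lmul_sum_left) (auto simp: fin_Q)
  also have "ltr N \<dots> = (\<Sum>j<length u. ltr N (lmul N (Q u j) (P v)))" by (rule ltr_sum)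
  also have "\<dots> = (\<Sum>j<length u. T (u @ v) j)"
  proof (rule sum.cong[OF refl])
    fix j assume "j \<in> {..<length u}"
    then have j: "j < length u" by simp
    have "Q (u @ v) j = lmul N (lmul N (P (take j u)) (ldiff (img (u ! j)))) (lmul N (P (drop (Suc j) u)) (P v))"
      using j by (simp add: Q_def nth_append P_append)
    also have "\<dots> = lmul N (Q u j) (P v)"
      unfolding Q_def by (rule lmul_assoc[symmetric]) (intro fin_lmul fin_P fin_ldiff fimg)+
    finally show "ltr N (lmul N (Q u j) (P v)) = T (u @ v) j" by (simp add: T_def)
  qed
  finally show ?thesis .
qed

lemma T_cyc:
  assumes j: "j < length y"
  shows "T (x @ y) (j + length x) = T (y @ x) j"
proof -
  let ?A = "lmul N (P (take j y)) (ldiff (img (y ! j)))" and ?B = "P (drop (Suc j) y)"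
  have fA: "finite (asupp ?A)" by (intro fin_lmul fin_P fin_ldiff fimg)
  have "Q (x @ y) (j + length x) = lmul N (lmul N (lmul N (P x) (P (take j y))) (ldiff (img (y ! j)))) ?B"
    by (simp add: Q_def nth_append P_append)
  also have "\<dots> = lmul N (lmul N (P x) ?A) ?B"
    by (simp add: lmul_assoc fin_P fin_ldiff fimg)
  also have "\<dots> = lmul N (P x) (lmul N ?A ?B)"
    by (rule lmul_assoc) (simp_all add: fin_P fA)
  finally have 1: "T (x @ y) (j + length x) = ltr N (lmul N (P x) (lmul N ?A ?B))"
    by (simp add: T_def)
  also have "\<dots> = ltr N (lmul N (lmul N ?A ?B) (P x))"
    by (rule ltr_cyclic) (simp_all add: fin_P fA fin_lmul)
  also have "lmul N (lmul N ?A ?B) (P x) = lmul N ?A (lmul N ?B (P x))"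
    by (rule lmul_assoc) (simp_all add: fin_P fA)
  also have "\<dots> = Q (y @ x) j"
    using j by (simp add: Q_def nth_append P_append)
  finally show ?thesis by (simp add: T_def)
qed

lemma F_ident_ne:
  assumes u: "u \<noteq> []" and v: "v \<noteq> []"
  shows "F (u @ v) - F (v @ u) = om N \<kappa> (P u) (P v)"
proof -
  define r where "r = length u"
  define s where "s = length v"
  define A where "A j = T (u @ v) j" for j
  have r: "r \<ge> 1" and s: "s \<ge> 1" using u v by (auto simp: r_def s_def Suc_le_eq)
  let ?a = "\<Sum>i<r. A i" and ?b = "\<Sum>j<s. A (j + r)"
  let ?x1 = "\<Sum>i<r. of_nat i * A i" and ?x2 = "\<Sum>j<s. of_nat j * A (j + r)"
  have zero: "?a + ?b = 0"
    using T_sum0[of "u @ v"] by (simp add: r_def s_def A_def sum_split)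
  have S1: "(\<Sum>j<length (u @ v). of_nat j * T (u @ v) j) = ?x1 + ?x2 + of_nat r * ?b"
    by (simp add: r_def s_def A_def sum_split algebra_simps sum.distrib sum_distrib_left)
  have c1: "T (v @ u) j = A (j + r)" if "j < s" for j
    using T_cyc[of j v u] that by (simp add: A_def r_def s_def)
  have c2: "T (v @ u) (i + s) = A i" if "i < r" for i
    using T_cyc[of i u v] that by (simp add: A_def r_def s_def)
  have "(\<Sum>j<length (v @ u). of_nat j * T (v @ u) j)
      = (\<Sum>j<s. of_nat j * T (v @ u) j) + (\<Sum>i<r. of_nat (i + s) * T (v @ u) (i + s))"
    by (simp add: r_def s_def sum_split)
  also have "\<dots> = ?x2 + (\<Sum>i<r. of_nat (i + s) * A i)"
    using c1 c2 by simp
  also have "\<dots> = ?x2 + ?x1 + of_nat s * ?a"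
    by (simp add: algebra_simps sum.distrib sum_distrib_left)
  finally have S2: "(\<Sum>j<length (v @ u). of_nat j * T (v @ u) j) = ?x2 + ?x1 + of_nat s * ?a" .
  have len: "length (u @ v) = r + s" "length (v @ u) = r + s" by (simp_all add: r_def s_def)
  have ge2: "\<not> r + s = 0" "\<not> r + s = 1" using r s by auto
  have "F (u @ v) - F (v @ u) = - (\<kappa> / of_nat (r + s)) * ((?x1 + ?x2 + of_nat r * ?b) - (?x2 + ?x1 + of_nat s * ?a))"
    unfolding F_def len S1[unfolded len] S2[unfolded len] using ge2 by (simp add: algebra_simps)
  also have "\<dots> = - (\<kappa> / of_nat (r + s)) * (- (of_nat (r + s)) * ?a)"
    using zero by (simp add: algebra_simps eq_neg_iff_add_eq_0[symmetric])
  also have "\<dots> = \<kappa> * ?a"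
  proof -
    have nz: "(of_nat (r + s) :: complex) \<noteq> 0" using ge2 by (simp only: of_nat_eq_0_iff) simp
    show ?thesis using nz by (simp only: divide_inverse) (simp add: field_simps)
  qed
  also have "\<dots> = om N \<kappa> (P u) (P v)" by (simp add: om_P A_def r_def)
  finally show ?thesis .
qed

lemma om_lone_left: "om N \<kappa> (lone N) Y = 0"
  by (subst om_sup[of "{0}"]) (simp_all add: asupp_lone)

lemma om_lone_right: "om N \<kappa> (P u) (lone N) = 0"
  by (simp add: om_ltr fin_P lmul_lone_right fin_ldiff bnd_ldiff bnd_P ltr_ldiff)

lemma F_ident: "F (u @ v) - F (v @ u) = om N \<kappa> (P u) (P v)"
proof (cases "u = [] \<or> v = []")
  case True
  then show ?thesis by (auto simp: om_lone_left om_lone_right)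
next
  case False
  then show ?thesis by (auto intro: F_ident_ne)
qed

end


context LW begin

definition Th :: "'g fa \<Rightarrow> lm" where
  "Th p = (\<lambda>k a b. lin p (\<lambda>w. P w k a b))"

definition Fp :: "'g fa \<Rightarrow> complex" where
  "Fp p = lin p F"

definition psi0 :: "'g fa \<Rightarrow> aff" where
  "psi0 p = (Th p, Fp p)"

definition SP :: "'g fa \<Rightarrow> int set" where
  "SP x = (\<Union>u\<in>supp x. asupp (P u))"

lemma fin_SP: "finite (supp x) \<Longrightarrow> finite (SP x)"
  by (simp add: SP_def fin_P)

lemma asupp_Th: "asupp (Th x) \<subseteq> SP x"
proof
  fix m assume "m \<in> asupp (Th x)"
  then obtain a b where "Th x m a b \<noteq> 0" by (auto simp: asupp_def fun_eq_iff)
  then have "(\<Sum>u\<in>supp x. x u * P u m a b) \<noteq> 0" by (simp add: Th_def lin_def)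
  then obtain u where "u \<in> supp x" "x u * P u m a b \<noteq> 0" by (meson sum.not_neutral_contains_not_neutral)
  then show "m \<in> SP x" by (auto simp: SP_def intro: asupp_mem)
qed

lemma fin_Th: "finite (supp x) \<Longrightarrow> finite (asupp (Th x))"
  using asupp_Th fin_SP finite_subset by blast

lemma lmul_lin:
  assumes fx: "finite (supp x)"
  shows "lmul N (Th x) (Th y) k a b = (\<Sum>u\<in>supp x. \<Sum>v\<in>supp y. x u * y v * lmul N (P u) (P v) k a b)"
proof -
  have fS: "finite (SP x)" using fx by (rule fin_SP)
  have "lmul N (Th x) (Th y) k a b = (\<Sum>m\<in>SP x. \<Sum>c<N. Th x m a c * Th y (k - m) c b)"
    by (rule lmul_sup[OF fS asupp_Th])
  also have "\<dots> = (\<Sum>m\<in>SP x. \<Sum>c<N. \<Sum>u\<in>supp x. \<Sum>v\<in>supp y. x u * y v * (P u m a c * P v (k - m) c b))"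
    by (simp add: Th_def lin_def sum_product algebra_simps)
  also have "\<dots> = (\<Sum>u\<in>supp x. \<Sum>v\<in>supp y. \<Sum>m\<in>SP x. \<Sum>c<N. x u * y v * (P u m a c * P v (k - m) c b))"
    by (rule sum_swap4)
  also have "\<dots> = (\<Sum>u\<in>supp x. \<Sum>v\<in>supp y. x u * y v * lmul N (P u) (P v) k a b)"
  proof (rule sum.cong[OF refl], rule sum.cong[OF refl])
    fix u v assume u: "u \<in> supp x"
    have "lmul N (P u) (P v) k a b = (\<Sum>m\<in>SP x. \<Sum>c<N. P u m a c * P v (k - m) c b)"
      by (rule lmul_sup[OF fS]) (use u in \<open>auto simp: SP_def\<close>)
    then show "(\<Sum>m\<in>SP x. \<Sum>c<N. x u * y v * (P u m a c * P v (k - m) c b)) = x u * y v * lmul N (P u) (P v) k a b"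
      by (simp add: sum_distrib_left)
  qed
  finally show ?thesis .
qed

lemma om_lin:
  assumes fx: "finite (supp x)"
  shows "om N \<kappa> (Th x) (Th y) = (\<Sum>u\<in>supp x. \<Sum>v\<in>supp y. x u * y v * om N \<kappa> (P u) (P v))"
proof -
  have fS: "finite (SP x)" using fx by (rule fin_SP)
  have "om N \<kappa> (Th x) (Th y) = (\<Sum>m\<in>SP x. of_int m * \<kappa> * mtr N (mmul N (Th x m) (Th y (- m))))"
    by (rule om_sup[OF fS asupp_Th])
  also have "\<dots> = (\<Sum>m\<in>SP x. \<Sum>a<N. \<Sum>c<N. \<Sum>v\<in>supp y. \<Sum>u\<in>supp x. x u * y v * (of_int m * \<kappa> * (P u m a c * P v (- m) c a)))"
    by (simp add: Th_def lin_def sum_product algebra_simps mtr_def mmul_def sum_distrib_left)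
  also have "\<dots> = (\<Sum>m\<in>SP x. \<Sum>a<N. \<Sum>c<N. \<Sum>u\<in>supp x. \<Sum>v\<in>supp y. x u * y v * (of_int m * \<kappa> * (P u m a c * P v (- m) c a)))"
    by (rule sum.cong[OF refl])+ (rule sum.swap)
  also have "\<dots> = (\<Sum>m\<in>SP x. \<Sum>u\<in>supp x. \<Sum>v\<in>supp y. \<Sum>a<N. \<Sum>c<N. x u * y v * (of_int m * \<kappa> * (P u m a c * P v (- m) c a)))"
    by (rule sum.cong[OF refl], rule sum_swap4)
  also have "\<dots> = (\<Sum>u\<in>supp x. \<Sum>v\<in>supp y. \<Sum>m\<in>SP x. \<Sum>a<N. \<Sum>c<N. x u * y v * (of_int m * \<kappa> * (P u m a c * P v (- m) c a)))"
    by (rule sum_swap3)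
  also have "\<dots> = (\<Sum>u\<in>supp x. \<Sum>v\<in>supp y. x u * y v * om N \<kappa> (P u) (P v))"
  proof (rule sum.cong[OF refl], rule sum.cong[OF refl])
    fix u v assume u: "u \<in> supp x"
    have "om N \<kappa> (P u) (P v) = (\<Sum>m\<in>SP x. of_int m * \<kappa> * mtr N (mmul N (P u m) (P v (- m))))"
      by (rule om_sup[OF fS]) (use u in \<open>auto simp: SP_def\<close>)
    then show "(\<Sum>m\<in>SP x. \<Sum>a<N. \<Sum>c<N. x u * y v * (of_int m * \<kappa> * (P u m a c * P v (- m) c a))) = x u * y v * om N \<kappa> (P u) (P v)"
      by (simp add: sum_distrib_left mtr_def mmul_def)
  qed
  finally show ?thesis .
qed

lemma Th_mul:
  assumes fx: "finite (supp x)" and fy: "finite (supp y)"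
  shows "lin (fa_mul x y) (\<lambda>w. P w k a b) = lmul N (Th x) (Th y) k a b"
  by (simp add: lin_conv[OF fx fy] lmul_lin[OF fx] P_append)

lemma psi0_comm:
  assumes fx: "finite (supp x)" and fy: "finite (supp y)"
  shows "psi0 (fa_comm x y) = aff_br N \<kappa> (psi0 x) (psi0 y)"
proof -
  have fxy: "finite (supp (fa_mul x y))" "finite (supp (fa_mul y x))"
    using fx fy by (simp_all add: finite_supp_mul)
  have 1: "Th (fa_comm x y) k a b = (\<Sum>m\<in>asupp (Th x). mbr N (Th x m) (Th y (k - m)) a b)" for k a b
  proof -
    have "(\<Sum>m\<in>asupp (Th x). mbr N (Th x m) (Th y (k - m)) a b)
        = (\<Sum>m\<in>asupp (Th x). mmul N (Th x m) (Th y (k - m)) a b) - (\<Sum>m\<in>asupp (Th x). mmul N (Th y (k - m)) (Th x m) a b)"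
      by (simp add: mbr_def msub_def sum_subtractf)
    also have "(\<Sum>m\<in>asupp (Th x). mmul N (Th x m) (Th y (k - m)) a b) = lmul N (Th x) (Th y) k a b"
      by (simp add: lmul_def)
    also have "(\<Sum>m\<in>asupp (Th x). mmul N (Th y (k - m)) (Th x m) a b) = lmul N (Th y) (Th x) k a b"
      by (rule lmul_rev) (simp_all add: fin_Th fx fy)
    finally show ?thesis
      by (simp add: Th_def fa_comm_def lin_sub fxy Th_mul fx fy)
  qed
  have 2: "Fp (fa_comm x y) = om N \<kappa> (Th x) (Th y)"
  proof -
    have "Fp (fa_comm x y) = lin (fa_mul x y) F - lin (fa_mul y x) F"
      by (simp add: Fp_def fa_comm_def lin_sub fxy)
    also have "\<dots> = (\<Sum>u\<in>supp x. \<Sum>v\<in>supp y. x u * y v * F (u @ v)) - (\<Sum>v\<in>supp y. \<Sum>u\<in>supp x. y v * x u * F (v @ u))"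
      by (simp add: lin_conv fx fy)
    also have "(\<Sum>v\<in>supp y. \<Sum>u\<in>supp x. y v * x u * F (v @ u)) = (\<Sum>u\<in>supp x. \<Sum>v\<in>supp y. x u * y v * F (v @ u))"
      by (subst sum.swap) (simp add: mult.commute)
    also have "(\<Sum>u\<in>supp x. \<Sum>v\<in>supp y. x u * y v * F (u @ v)) - (\<Sum>u\<in>supp x. \<Sum>v\<in>supp y. x u * y v * F (v @ u))
        = (\<Sum>u\<in>supp x. \<Sum>v\<in>supp y. x u * y v * (F (u @ v) - F (v @ u)))"
      by (simp add: sum_subtractf right_diff_distrib)
    also have "\<dots> = om N \<kappa> (Th x) (Th y)"
      by (simp add: F_ident om_lin fx)
    finally show ?thesis .
  qed
  show ?thesis
    unfolding psi0_def aff_br_def fst_conv snd_conv 2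
    by (simp add: 1[symmetric] om_def fun_eq_iff)
qed

lemma psi0_add:
  assumes "finite (supp x)" "finite (supp y)"
  shows "psi0 (fa_add x y) = aff_add (psi0 x) (psi0 y)"
  using assms by (simp add: psi0_def aff_add_def Th_def Fp_def lin_add madd_def fun_eq_iff)

lemma psi0_smul:
  assumes "finite (supp x)"
  shows "psi0 (fa_smul c x) = aff_smul c (psi0 x)"
  using assms by (simp add: psi0_def aff_smul_def Th_def Fp_def lin_smul fun_eq_iff)

lemma psi0_zero: "psi0 fa_zero = ((\<lambda>m a b. 0), 0)"
  by (simp add: psi0_def Th_def Fp_def lin_zero)

lemma psi0_gen: "psi0 (fa_gen g) = (img g, F [g])"
  by (simp add: psi0_def Th_def Fp_def lin_gen lmul_lone_right fimg bimg)

end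


definition zl :: lm where "zl = (\<lambda>k a b. 0)"
definition zaff :: aff where "zaff = ((\<lambda>m a b. 0), 0)"

definition eE :: "nat \<Rightarrow> nat \<Rightarrow> lm" where
  "eE n i = (if 1 \<le> i \<and> i \<le> n then fst (hat_e n i) else zl)"
definition eF :: "nat \<Rightarrow> nat \<Rightarrow> lm" where
  "eF n i = (if 1 \<le> i \<and> i \<le> n then fst (hat_f n i) else zl)"

definition gimg :: "nat \<Rightarrow> gimgen \<Rightarrow> lm" where
  "gimg n g = (case g of GE i \<Rightarrow> eE n i | GF i \<Rightarrow> eF n i
     | GH i \<Rightarrow> (\<lambda>k a b. lmul (2*n) (eE n i) (eF n i) k a b - lmul (2*n) (eF n i) (eE n i) k a b))"

definition gc1 :: "nat \<Rightarrow> complex \<Rightarrow> gimgen \<Rightarrow> complex" where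
  "gc1 n \<kappa> g = (case g of GH i \<Rightarrow> om (2*n) \<kappa> (eE n i) (eF n i) | _ \<Rightarrow> 0)"

lemma asupp_sub3: "(\<And>k a b. X k a b \<noteq> 0 \<Longrightarrow> k \<in> {-1,0,1}) \<Longrightarrow> finite (asupp X)"
  by (rule finite_subset[of _ "{-1,0,1}"]) (auto simp: asupp_def fun_eq_iff)

lemma fin_eE: "finite (asupp (eE n i))"
  by (rule asupp_sub3) (auto simp: eE_def zl_def hat_e_def aff_add_def aff_single_def madd_def msub_def split: if_splits)

lemma fin_eF: "finite (asupp (eF n i))"
  by (rule asupp_sub3) (auto simp: eF_def zl_def hat_f_def aff_add_def aff_single_def madd_def msub_def split: if_splits)

lemma bnd_eE: "bnd (2*n) (eE n i)"
  by (auto simp: bnd_def eE_def zl_def hat_e_def aff_add_def aff_single_def madd_def msub_def munit_def Epos_def Eneg_def)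

lemma bnd_eF: "bnd (2*n) (eF n i)"
  by (auto simp: bnd_def eF_def zl_def hat_f_def aff_add_def aff_single_def madd_def msub_def munit_def Epos_def Eneg_def)

lemma LW_inst: "LW (2*n) (gimg n)"
proof
  fix g
  show "finite (asupp (gimg n g))"
  proof (cases g)
    case (GH i)
    have "asupp (gimg n g) \<subseteq> asupp (lmul (2*n) (eE n i) (eF n i)) \<union> asupp (lmul (2*n) (eF n i) (eE n i))"
      by (auto simp: GH gimg_def asupp_def fun_eq_iff) blast
    then show ?thesis using fin_lmul fin_eE fin_eF finite_subset by (metis finite_Un)
  qed (simp_all add: gimg_def fin_eE fin_eF)
  show "bnd (2*n) (gimg n g)"
  proof (cases g)
    case (GH i)
    then show ?thesis using bnd_lmul[OF bnd_eE bnd_eF, of n i] bnd_lmul[OF bnd_eF bnd_eE, of n i]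
      by (simp add: gimg_def bnd_def)
  qed (simp_all add: gimg_def bnd_eE bnd_eF)
qed


lemma FA_fin: "p \<in> FA S \<Longrightarrow> finite (supp p)"
  by (simp add: FA_def supp_def)

lemma FA_add: "p \<in> FA S \<Longrightarrow> q \<in> FA S \<Longrightarrow> fa_add p q \<in> FA S"
  unfolding FA_def fa_add_def
  by (auto intro: finite_subset[of _ "{w. p w \<noteq> 0} \<union> {w. q w \<noteq> 0}"]) (metis add_0 subsetD)

lemma FA_smul: "p \<in> FA S \<Longrightarrow> fa_smul a p \<in> FA S"
  unfolding FA_def fa_smul_def by (auto intro: finite_subset[of _ "{w. p w \<noteq> 0}"])

lemma FA_sub: "p \<in> FA S \<Longrightarrow> q \<in> FA S \<Longrightarrow> fa_sub p q \<in> FA S"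
  unfolding FA_def fa_sub_def
  by (auto intro: finite_subset[of _ "{w. p w \<noteq> 0} \<union> {w. q w \<noteq> 0}"]) (metis subsetD)

lemma FA_mul: assumes "p \<in> FA S" "q \<in> FA S" shows "fa_mul p q \<in> FA S"
proof -
  have fin: "finite (supp (fa_mul p q))" using assms by (simp add: finite_supp_mul FA_fin)
  have "set w \<subseteq> S" if "fa_mul p q w \<noteq> 0" for w
  proof -
    from that have "w \<in> supp (fa_mul p q)" by (simp add: supp_def)
    then have "w \<in> (\<lambda>(u,v). u @ v) ` (supp p \<times> supp q)" using supp_mul by blast
    then obtain u v where "u \<in> supp p" "v \<in> supp q" "w = u @ v" by auto
    then show ?thesis using assms by (auto simp: FA_def supp_def)
  qed
  then show ?thesis using fin by (simp add: FA_def supp_def)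
qed

lemma FA_comm: "p \<in> FA S \<Longrightarrow> q \<in> FA S \<Longrightarrow> fa_comm p q \<in> FA S"
  by (simp add: fa_comm_def FA_sub FA_mul)

lemma FA_gen: "g \<in> S \<Longrightarrow> fa_gen g \<in> FA S"
  by (simp add: FA_def fa_gen_def)

lemma FA_zero: "fa_zero \<in> FA S"
  by (simp add: FA_def fa_zero_def)

lemma FA_one: "fa_one \<in> FA S"
  by (simp add: FA_def fa_one_def)

lemma span_FA: "x \<in> fa_lie_span (fa_gen ` S) \<Longrightarrow> x \<in> FA S"
  by (induction rule: fa_lie_span.induct) (auto intro: FA_add FA_smul FA_comm FA_gen)

lemma fa_sub_eq: "fa_sub x y = fa_add x (fa_smul (-1) y)"
  by (simp add: fa_sub_def fa_add_def fa_smul_def fun_eq_iff)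

lemma span_sub: "x \<in> fa_lie_span S \<Longrightarrow> y \<in> fa_lie_span S \<Longrightarrow> fa_sub x y \<in> fa_lie_span S"
  by (simp add: fa_sub_eq fa_lie_span.add fa_lie_span.smul)

lemma span_adpow: "x \<in> fa_lie_span S \<Longrightarrow> y \<in> fa_lie_span S \<Longrightarrow> fa_ad_pow k x y \<in> fa_lie_span S"
  by (induction k) (auto simp: fa_ad_pow_def intro: fa_lie_span.comm)

lemma gens_in: "1 \<le> i \<Longrightarrow> i \<le> n \<Longrightarrow> GE i \<in> gim_gens n \<and> GF i \<in> gim_gens n \<and> GH i \<in> gim_gens n"
  by (auto simp: gim_gens_def)

lemma gen_L: "g \<in> gim_gens n \<Longrightarrow> fa_gen g \<in> gim_FL n"
  by (simp add: gim_FL_def fa_lie_span.gen)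

lemma rels_L:
  assumes "r \<in> gim_rels n" shows "r \<in> gim_FL n"
proof -
  have E: "ge i \<in> gim_FL n" "gf i \<in> gim_FL n" "gh i \<in> gim_FL n" if "i \<in> {1..n}" for i
    using that gens_in[of i n] by (auto intro: gen_L)
  have L: "x \<in> gim_FL n \<Longrightarrow> y \<in> gim_FL n \<Longrightarrow> fa_comm x y \<in> gim_FL n"
          "x \<in> gim_FL n \<Longrightarrow> y \<in> gim_FL n \<Longrightarrow> fa_sub x y \<in> gim_FL n"
          "x \<in> gim_FL n \<Longrightarrow> y \<in> gim_FL n \<Longrightarrow> fa_add x y \<in> gim_FL n"
          "x \<in> gim_FL n \<Longrightarrow> fa_smul c x \<in> gim_FL n"
          "x \<in> gim_FL n \<Longrightarrow> y \<in> gim_FL n \<Longrightarrow> fa_ad_pow k x y \<in> gim_FL n" for x y c k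
    by (simp_all add: gim_FL_def fa_lie_span.comm span_sub fa_lie_span.add fa_lie_span.smul span_adpow)
  show ?thesis using assms unfolding gim_rels_def
    by (auto intro!: L E)
qed

lemma zero_L: "n \<ge> 1 \<Longrightarrow> fa_zero \<in> gim_FL n"
proof -
  assume "n \<ge> 1"
  then have "ge 1 \<in> gim_FL n" using gens_in[of 1 n] gen_L by auto
  then have "fa_smul 0 (ge 1) \<in> gim_FL n" by (simp add: gim_FL_def fa_lie_span.smul)
  moreover have "fa_smul 0 (ge 1) = fa_zero" by (simp add: fa_smul_def fa_zero_def fun_eq_iff)
  ultimately show ?thesis by simp
qed

lemma I_L: assumes "x \<in> gim_I n" "n \<ge> 1" shows "x \<in> gim_FL n"
  using assms(1) unfolding gim_I_def
proof (induction rule: fa_lie_ideal.induct)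
  case (gen r) then show ?case by (rule rels_L)
next
  case zero then show ?case using assms(2) by (rule zero_L)
qed (auto simp: gim_FL_def intro: fa_lie_span.add fa_lie_span.smul fa_lie_span.comm)

lemma L_FA: "x \<in> gim_FL n \<Longrightarrow> x \<in> FA (gim_gens n)"
  by (simp add: gim_FL_def span_FA)


definition psiG :: "nat \<Rightarrow> complex \<Rightarrow> gimgen fa \<Rightarrow> aff" where
  "psiG n \<kappa> = LW.psi0 (2*n) \<kappa> (gimg n) (gc1 n \<kappa>)"

lemma psiG_add: "finite (supp x) \<Longrightarrow> finite (supp y) \<Longrightarrow> psiG n \<kappa> (fa_add x y) = aff_add (psiG n \<kappa> x) (psiG n \<kappa> y)"
  unfolding psiG_def by (rule LW.psi0_add[OF LW_inst])

lemma psiG_smul: "finite (supp x) \<Longrightarrow> psiG n \<kappa> (fa_smul c x) = aff_smul c (psiG n \<kappa> x)"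
  unfolding psiG_def by (rule LW.psi0_smul[OF LW_inst])

lemma psiG_comm: "finite (supp x) \<Longrightarrow> finite (supp y) \<Longrightarrow> psiG n \<kappa> (fa_comm x y) = aff_br (2*n) \<kappa> (psiG n \<kappa> x) (psiG n \<kappa> y)"
  unfolding psiG_def by (rule LW.psi0_comm[OF LW_inst])

lemma psiG_zero: "psiG n \<kappa> fa_zero = zaff"
  unfolding psiG_def zaff_def by (rule LW.psi0_zero[OF LW_inst])

lemma psiG_gen: "psiG n \<kappa> (fa_gen g) = (gimg n g, gc1 n \<kappa> g)"
  unfolding psiG_def LW.psi0_gen[OF LW_inst]
  by (simp add: LW.F_def[OF LW_inst])

lemma psiG_sub: "finite (supp x) \<Longrightarrow> finite (supp y) \<Longrightarrow>
   psiG n \<kappa> (fa_sub x y) = aff_add (psiG n \<kappa> x) (aff_smul (-1) (psiG n \<kappa> y))"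
  by (simp add: fa_sub_eq psiG_add psiG_smul finite_subset[OF supp_smul])

lemma fin_comm: "finite (supp x) \<Longrightarrow> finite (supp y) \<Longrightarrow> finite (supp (fa_comm x y))"
  unfolding fa_comm_def by (rule finite_subset[OF supp_sub]) (simp add: finite_supp_mul)

lemma psiG_adpow: "finite (supp x) \<Longrightarrow> finite (supp y) \<Longrightarrow>
   psiG n \<kappa> (fa_ad_pow k x y) = ((aff_br (2*n) \<kappa> (psiG n \<kappa> x)) ^^ k) (psiG n \<kappa> y)"
proof (induction k)
  case 0 then show ?case by (simp add: fa_ad_pow_def)
next
  case (Suc k)
  have f: "finite (supp (fa_ad_pow k x y))"
    unfolding fa_ad_pow_def by (induction k) (simp_all add: Suc fin_comm)
  show ?case using Suc f by (simp add: fa_ad_pow_def psiG_comm)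
qed

lemma aff_br_pair:
  assumes fX: "finite (asupp X)" and fY: "finite (asupp Y)"
  shows "aff_br N \<kappa> (X, c) (Y, d) = ((\<lambda>k a b. lmul N X Y k a b - lmul N Y X k a b), om N \<kappa> X Y)"
proof -
  have "(\<Sum>m\<in>asupp X. mbr N (X m) (Y (k - m)) a b) = lmul N X Y k a b - lmul N Y X k a b" for k a b
  proof -
    have "(\<Sum>m\<in>asupp X. mbr N (X m) (Y (k - m)) a b)
        = (\<Sum>m\<in>asupp X. mmul N (X m) (Y (k - m)) a b) - (\<Sum>m\<in>asupp X. mmul N (Y (k - m)) (X m) a b)"
      by (simp add: mbr_def msub_def sum_subtractf)
    also have "(\<Sum>m\<in>asupp X. mmul N (Y (k - m)) (X m) a b) = lmul N Y X k a b"
      by (rule lmul_rev) (simp_all add: fX fY)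
    finally show ?thesis by (simp add: lmul_def)
  qed
  then show ?thesis by (simp add: aff_br_def om_def fun_eq_iff)
qed

lemma snd_hat_e: "snd (hat_e n i) = 0"
  by (simp add: hat_e_def aff_add_def aff_single_def)
lemma snd_hat_f: "snd (hat_f n i) = 0"
  by (simp add: hat_f_def aff_add_def aff_single_def)

lemma psiG_e: "i \<in> {1..n} \<Longrightarrow> psiG n \<kappa> (ge i) = hat_e n i"
  by (simp add: psiG_gen gimg_def gc1_def eE_def prod_eq_iff snd_hat_e)
lemma psiG_f: "i \<in> {1..n} \<Longrightarrow> psiG n \<kappa> (gf i) = hat_f n i"
  by (simp add: psiG_gen gimg_def gc1_def eF_def prod_eq_iff snd_hat_f)

lemma hat_e_eq: "i \<in> {1..n} \<Longrightarrow> hat_e n i = (eE n i, 0)"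
  by (simp add: eE_def prod_eq_iff snd_hat_e)
lemma hat_f_eq: "i \<in> {1..n} \<Longrightarrow> hat_f n i = (eF n i, 0)"
  by (simp add: eF_def prod_eq_iff snd_hat_f)

lemma psiG_h: "i \<in> {1..n} \<Longrightarrow> psiG n \<kappa> (gh i) = aff_br (2*n) \<kappa> (hat_e n i) (hat_f n i)"
  by (simp add: psiG_gen gimg_def gc1_def hat_e_eq hat_f_eq aff_br_pair fin_eE fin_eF)


definition lU :: "int \<Rightarrow> nat \<Rightarrow> nat \<Rightarrow> lm" where
  "lU m p q = (\<lambda>k a b. if k = m \<and> a = p \<and> b = q then 1 else 0)"
definition lpl :: "lm \<Rightarrow> lm \<Rightarrow> lm" where "lpl X Y = (\<lambda>k a b. X k a b + Y k a b)"
definition lmi :: "lm \<Rightarrow> lm \<Rightarrow> lm" where "lmi X Y = (\<lambda>k a b. X k a b - Y k a b)"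
definition lsc :: "complex \<Rightarrow> lm \<Rightarrow> lm" where "lsc c X = (\<lambda>k a b. c * X k a b)"

abbreviation fin where "fin X \<equiv> finite (asupp X)"

lemma fin_lU: "fin (lU m p q)"
  by (rule finite_subset[of _ "{m}"]) (auto simp: asupp_def lU_def fun_eq_iff)
lemma fin_zl: "fin zl" by (simp add: zl_def asupp_def)
lemma fin_lpl: "fin X \<Longrightarrow> fin Y \<Longrightarrow> fin (lpl X Y)"
  by (rule finite_subset[of _ "asupp X \<union> asupp Y"]) (force simp: asupp_def lpl_def fun_eq_iff, simp)
lemma fin_lmi: "fin X \<Longrightarrow> fin Y \<Longrightarrow> fin (lmi X Y)"
  by (rule finite_subset[of _ "asupp X \<union> asupp Y"]) (force simp: asupp_def lmi_def fun_eq_iff, simp)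
lemma fin_lsc: "fin X \<Longrightarrow> fin (lsc c X)"
  by (rule finite_subset[of _ "asupp X"]) (auto simp: asupp_def lsc_def fun_eq_iff)
lemma fin_if: "fin X \<Longrightarrow> fin Y \<Longrightarrow> fin (if c then X else Y)" by simp

lemma lmul_lU_lU: "q < N \<Longrightarrow> lmul N (lU m p q) (lU m' p' q') = (if q = p' then lU (m + m') p q' else zl)"
proof (intro ext)
  fix k a b assume qN: "q < N"
  have "lmul N (lU m p q) (lU m' p' q') k a b = (\<Sum>m''\<in>{m}. \<Sum>c<N. lU m p q m'' a c * lU m' p' q' (k - m'') c b)"
    by (rule lmul_sup) (auto simp: asupp_def lU_def fun_eq_iff)
  also have "\<dots> = (\<Sum>c<N. lU m p q m a c * lU m' p' q' (k - m) c b)" by simp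
  also have "\<dots> = (\<Sum>c<N. if c = q then (if a = p \<and> q = p' \<and> k - m = m' \<and> b = q' then 1 else 0) else 0)"
    by (rule sum.cong) (auto simp: lU_def)
  also have "\<dots> = (if q = p' then lU (m + m') p q' else zl) k a b"
    using qN by (auto simp: sum.delta' lU_def zl_def)
  finally show "lmul N (lU m p q) (lU m' p' q') k a b = (if q = p' then lU (m + m') p q' else zl) k a b" .
qed

lemma lmul_linL:
  assumes "fin X" "fin Y"
  shows "lmul N (\<lambda>k a b. \<alpha> * X k a b + \<beta> * Y k a b) Z k a b = \<alpha> * lmul N X Z k a b + \<beta> * lmul N Y Z k a b"
proof -
  let ?S = "asupp X \<union> asupp Y"
  have f: "finite ?S" using assms by simp
  show ?thesis
    apply (subst lmul_sup[OF f], force simp: asupp_def fun_eq_iff)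
    apply (subst lmul_sup[OF f], simp)
    apply (subst lmul_sup[OF f], simp)
    apply (simp add: distrib_right sum.distrib sum_distrib_left mult.assoc)
    done
qed

lemma lmul_linR:
  shows "lmul N X (\<lambda>k a b. \<alpha> * Y1 k a b + \<beta> * Y2 k a b) k a b = \<alpha> * lmul N X Y1 k a b + \<beta> * lmul N X Y2 k a b"
  unfolding lmul_def mmul_def
  by (simp add: distrib_left sum.distrib sum_distrib_left algebra_simps)

lemma lmul_plL: "fin X \<Longrightarrow> fin Y \<Longrightarrow> lmul N (lpl X Y) Z = lpl (lmul N X Z) (lmul N Y Z)"
  using lmul_linL[of X Y N 1 1 Z] by (simp add: lpl_def fun_eq_iff)
lemma lmul_miL: "fin X \<Longrightarrow> fin Y \<Longrightarrow> lmul N (lmi X Y) Z = lmi (lmul N X Z) (lmul N Y Z)"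
  using lmul_linL[of X Y N 1 "-1" Z] by (simp add: lmi_def fun_eq_iff)
lemma lmul_scL: "fin X \<Longrightarrow> lmul N (lsc c X) Z = lsc c (lmul N X Z)"
proof -
  assume f: "fin X"
  have "fin (\<lambda>k a b. 0)" using fin_zl by (simp add: zl_def)
  then show ?thesis using lmul_linL[OF f, of "\<lambda>k a b. 0" N c 0 Z] by (simp add: lsc_def fun_eq_iff)
qed
lemma lmul_plR: "lmul N X (lpl Y1 Y2) = lpl (lmul N X Y1) (lmul N X Y2)"
  using lmul_linR[of N X 1 Y1 1 Y2] by (simp add: lpl_def fun_eq_iff)
lemma lmul_miR: "lmul N X (lmi Y1 Y2) = lmi (lmul N X Y1) (lmul N X Y2)"
  using lmul_linR[of N X 1 Y1 "-1" Y2] by (simp add: lmi_def fun_eq_iff)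
lemma lmul_scR: "lmul N X (lsc c Y) = lsc c (lmul N X Y)"
  using lmul_linR[of N X c Y 0 Y] by (simp add: lsc_def fun_eq_iff)
lemma lmul_zlL: "lmul N zl Z = zl"
  by (simp add: lmul_def zl_def asupp_def fun_eq_iff)
lemma lmul_zlR: "lmul N X zl = zl"
  by (simp add: lmul_def zl_def mmul_def fun_eq_iff)
lemma lmul_ifL: "lmul N (if c then A else B) Z = (if c then lmul N A Z else lmul N B Z)" by simp
lemma lmul_ifR: "lmul N Z (if c then A else B) = (if c then lmul N Z A else lmul N Z B)" by simp


lemma om_lU_lU: "p < N \<Longrightarrow> q < N \<Longrightarrow> om N \<kappa> (lU m p q) (lU m' p' q') =
   (if q = p' then if q' = p then if m' = - m then of_int m * \<kappa> else 0 else 0 else 0)"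
proof -
  assume pq: "p < N" "q < N"
  let ?V = "if m' = - m \<and> q = p' \<and> q' = p then (1::complex) else 0"
  have "om N \<kappa> (lU m p q) (lU m' p' q') = (\<Sum>m''\<in>{m}. of_int m'' * \<kappa> * mtr N (mmul N (lU m p q m'') (lU m' p' q' (- m''))))"
    by (rule om_sup) (auto simp: asupp_def lU_def fun_eq_iff)
  also have "\<dots> = of_int m * \<kappa> * (\<Sum>a<N. \<Sum>c<N. lU m p q m a c * lU m' p' q' (- m) c a)"
    by (simp add: mtr_def mmul_def)
  also have "(\<Sum>a<N. \<Sum>c<N. lU m p q m a c * lU m' p' q' (- m) c a)
      = (\<Sum>a<N. if a = p then ?V else 0)"
  proof -
    have e: "lU m p q m a c * lU m' p' q' (- m) c a = (if c = q then (if a = p then ?V else 0) else 0)" for a c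
      by (auto simp: lU_def)
    show ?thesis using pq by (simp only: e) (simp add: sum.delta)
  qed
  also have "\<dots> = ?V" using pq by (simp add: sum.delta)
  finally show ?thesis by auto
qed

lemma om_linL:
  assumes "fin X" "fin Y"
  shows "om N \<kappa> (\<lambda>k a b. \<alpha> * X k a b + \<beta> * Y k a b) Z = \<alpha> * om N \<kappa> X Z + \<beta> * om N \<kappa> Y Z"
proof -
  let ?S = "asupp X \<union> asupp Y"
  have f: "finite ?S" using assms by simp
  show ?thesis
    apply (subst om_sup[OF f], force simp: asupp_def fun_eq_iff)
    apply (subst om_sup[OF f], simp)
    apply (subst om_sup[OF f], simp)
    apply (simp add: mtr_def mmul_def distrib_right sum.distrib sum_distrib_left algebra_simps)
    done
qed

lemma om_linR:
  shows "om N \<kappa> X (\<lambda>k a b. \<alpha> * Y1 k a b + \<beta> * Y2 k a b) = \<alpha> * om N \<kappa> X Y1 + \<beta> * om N \<kappa> X Y2"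
  unfolding om_def mtr_def mmul_def
  by (simp add: distrib_left sum.distrib sum_distrib_left algebra_simps)

lemma fin_zero: "fin (\<lambda>k a b. 0)" using fin_zl by (simp add: zl_def)

lemma om_plL: "fin X \<Longrightarrow> fin Y \<Longrightarrow> om N \<kappa> (lpl X Y) Z = om N \<kappa> X Z + om N \<kappa> Y Z"
  using om_linL[of X Y N \<kappa> 1 1 Z] by (simp add: lpl_def)
lemma om_miL: "fin X \<Longrightarrow> fin Y \<Longrightarrow> om N \<kappa> (lmi X Y) Z = om N \<kappa> X Z - om N \<kappa> Y Z"
  using om_linL[of X Y N \<kappa> 1 "-1" Z] by (simp add: lmi_def)
lemma om_scL: "fin X \<Longrightarrow> om N \<kappa> (lsc c X) Z = c * om N \<kappa> X Z"
  using om_linL[OF _ fin_zero, of X N \<kappa> c 0 Z] by (simp add: lsc_def)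
lemma om_plR: "om N \<kappa> X (lpl Y1 Y2) = om N \<kappa> X Y1 + om N \<kappa> X Y2"
  using om_linR[of N \<kappa> X 1 Y1 1 Y2] by (simp add: lpl_def)
lemma om_miR: "om N \<kappa> X (lmi Y1 Y2) = om N \<kappa> X Y1 - om N \<kappa> X Y2"
  using om_linR[of N \<kappa> X 1 Y1 "-1" Y2] by (simp add: lmi_def)
lemma om_scR: "om N \<kappa> X (lsc c Y) = c * om N \<kappa> X Y"
  using om_linR[of N \<kappa> X c Y 0 Y] by (simp add: lsc_def)
lemma om_zlL: "om N \<kappa> zl Z = 0" by (simp add: om_def zl_def asupp_def)
lemma om_zlR: "om N \<kappa> X zl = 0" by (simp add: om_def zl_def mtr_def mmul_def)
lemma om_ifL: "om N \<kappa> (if c then A else B) Z = (if c then om N \<kappa> A Z else om N \<kappa> B Z)" by simp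
lemma om_ifR: "om N \<kappa> Z (if c then A else B) = (if c then om N \<kappa> Z A else om N \<kappa> Z B)" by simp

lemma aff_br_pair2: "fin X \<Longrightarrow> fin Y \<Longrightarrow> aff_br N \<kappa> (X, c) (Y, d) = (lmi (lmul N X Y) (lmul N Y X), om N \<kappa> X Y)"
  by (simp add: aff_br_pair lmi_def)

lemma eE_lt: "1 \<le> i \<Longrightarrow> i < n \<Longrightarrow> eE n i = lmi (lU 0 (i - 1) i) (lU 0 (n + i) (n + i - 1))"
  by (auto simp: eE_def hat_e_def aff_single_def msub_def Epos_def Eneg_def munit_def lU_def lmi_def fun_eq_iff)
lemma eE_n: "1 \<le> n \<Longrightarrow> eE n n = lpl (lU 0 (n - 1) n) (lU (-1) 0 (2*n - 1))"
  by (auto simp: eE_def hat_e_def aff_single_def aff_add_def madd_def Epos_def munit_def lU_def lpl_def fun_eq_iff)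
lemma eF_lt: "1 \<le> i \<Longrightarrow> i < n \<Longrightarrow> eF n i = lmi (lU 0 i (i - 1)) (lU 0 (n + i - 1) (n + i))"
  by (auto simp: eF_def hat_f_def aff_single_def msub_def Epos_def Eneg_def munit_def lU_def lmi_def fun_eq_iff)
lemma eF_n: "1 \<le> n \<Longrightarrow> eF n n = lpl (lU 0 n (n - 1)) (lU 1 (2*n - 1) 0)"
  by (auto simp: eF_def hat_f_def aff_single_def aff_add_def madd_def Eneg_def munit_def lU_def lpl_def fun_eq_iff)

lemma if_neq: "x \<noteq> y \<Longrightarrow> (if (x::nat) = y then A else B) = B" by auto

lemmas usimps = lmul_lU_lU lmul_plL lmul_miL lmul_scL lmul_plR lmul_miR lmul_scR lmul_zlL lmul_zlR lmul_ifL lmul_ifR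
  om_lU_lU om_plL om_miL om_scL om_plR om_miR om_scR om_zlL om_zlR om_ifL om_ifR
  fin_lU fin_zl fin_lpl fin_lmi fin_lsc fin_if fin_lmul aff_br_pair2

lemma zaff_eq: "(X, c) = zaff \<longleftrightarrow> (\<forall>k a b. X k a b = 0) \<and> c = 0"
  by (auto simp: zaff_def fun_eq_iff)

lemmas evals = lU_def lpl_def lmi_def lsc_def zl_def

lemma test: assumes "1 \<le> i" "i < n" "1 \<le> j" "j < n" "i \<noteq> j"
  shows "aff_br (2*n) \<kappa> (eE n i, 0) (eF n j, 0) = zaff"
  using assms apply (simp add: eE_lt eF_lt usimps if_neq split del: if_split)
  apply (simp add: zaff_eq evals split del: if_split)
  done


lemma aff_add_pair: "aff_add (X, c) (Y, d) = (lpl X Y, c + d)"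
  by (simp add: aff_add_def lpl_def madd_def fun_eq_iff)
lemma aff_smul_pair: "aff_smul a (X, c) = (lsc a X, a * c)"
  by (simp add: aff_smul_def lsc_def fun_eq_iff)

lemmas csimps = eE_lt eE_n eF_lt eF_n usimps if_neq aff_add_pair aff_smul_pair numeral_2_eq_2 funpow.simps o_apply

lemma t1: assumes "3 \<le> n" "1 \<le> i" "i + 1 < n" "j = i + 1"
  shows "((aff_br (2*n) \<kappa> (eE n i, 0)) ^^ 2) (eE n j, 0) = zaff"
  using assms apply (simp add: csimps split del: if_split)
  apply (simp add: zaff_eq evals split del: if_split)
  done

lemma t2: assumes "3 \<le> n" "1 \<le> i" "i + 1 < n" "j = i + 1"
  shows "aff_add (aff_br (2*n) \<kappa> (aff_br (2*n) \<kappa> (eE n i, 0) (eF n i, 0)) (eE n j, 0)) (aff_smul (-1) (aff_smul (-1) (eE n j, 0))) = zaff"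
  using assms apply (simp add: csimps split del: if_split)
  apply (simp add: zaff_eq evals split del: if_split)
  done


lemma C1_LLeq: assumes "3 \<le> n" "1 \<le> i" "i < n" "j = i"
  shows "aff_add (aff_br (2*n) \<kappa> (aff_br (2*n) \<kappa> (eE n i, 0) (eF n i, 0)) (eE n j, 0)) (aff_smul (-1) (aff_smul (of_int (2)) (eE n j, 0))) = zaff"
  using assms apply (simp add: csimps split del: if_split)
  apply (simp add: zaff_eq evals split del: if_split)
  done

lemma C2_LLeq: assumes "3 \<le> n" "1 \<le> i" "i < n" "j = i"
  shows "aff_add (aff_br (2*n) \<kappa> (aff_br (2*n) \<kappa> (eE n i, 0) (eF n i, 0)) (eF n j, 0)) (aff_smul (of_int (2)) (eF n j, 0)) = zaff"
  using assms apply (simp add: csimps split del: if_split)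
  apply (simp add: zaff_eq evals split del: if_split)
  done

lemma C1_LLup: assumes "3 \<le> n" "1 \<le> i" "i + 1 < n" "j = i + 1"
  shows "aff_add (aff_br (2*n) \<kappa> (aff_br (2*n) \<kappa> (eE n i, 0) (eF n i, 0)) (eE n j, 0)) (aff_smul (-1) (aff_smul (of_int (-1)) (eE n j, 0))) = zaff"
  using assms apply (simp add: csimps split del: if_split)
  apply (simp add: zaff_eq evals split del: if_split)
  done

lemma C2_LLup: assumes "3 \<le> n" "1 \<le> i" "i + 1 < n" "j = i + 1"
  shows "aff_add (aff_br (2*n) \<kappa> (aff_br (2*n) \<kappa> (eE n i, 0) (eF n i, 0)) (eF n j, 0)) (aff_smul (of_int (-1)) (eF n j, 0)) = zaff"
  using assms apply (simp add: csimps split del: if_split)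
  apply (simp add: zaff_eq evals split del: if_split)
  done

lemma C3_LLup_0: assumes "3 \<le> n" "1 \<le> i" "i + 1 < n" "j = i + 1"
  shows "(aff_br (2*n) \<kappa> (eE n i, 0) (eF n j, 0)) = zaff"
  using assms apply (simp add: csimps split del: if_split)
  apply (simp add: zaff_eq evals split del: if_split)
  done

lemma C3_LLup_1: assumes "3 \<le> n" "1 \<le> i" "i + 1 < n" "j = i + 1"
  shows "(aff_br (2*n) \<kappa> (eF n i, 0) (eE n j, 0)) = zaff"
  using assms apply (simp add: csimps split del: if_split)
  apply (simp add: zaff_eq evals split del: if_split)
  done

lemma C3_LLup_2: assumes "3 \<le> n" "1 \<le> i" "i + 1 < n" "j = i + 1"
  shows "(((aff_br (2*n) \<kappa> (eE n i, 0)) ^^ 2) (eE n j, 0)) = zaff"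
  using assms apply (simp add: csimps split del: if_split)
  apply (simp add: zaff_eq evals split del: if_split)
  done

lemma C3_LLup_3: assumes "3 \<le> n" "1 \<le> i" "i + 1 < n" "j = i + 1"
  shows "(((aff_br (2*n) \<kappa> (eF n i, 0)) ^^ 2) (eF n j, 0)) = zaff"
  using assms apply (simp add: csimps split del: if_split)
  apply (simp add: zaff_eq evals split del: if_split)
  done

lemma C1_LLdn: assumes "3 \<le> n" "1 \<le> j" "j + 1 < n" "i = j + 1"
  shows "aff_add (aff_br (2*n) \<kappa> (aff_br (2*n) \<kappa> (eE n i, 0) (eF n i, 0)) (eE n j, 0)) (aff_smul (-1) (aff_smul (of_int (-1)) (eE n j, 0))) = zaff"
  using assms apply (simp add: csimps split del: if_split)
  apply (simp add: zaff_eq evals split del: if_split)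
  done

lemma C2_LLdn: assumes "3 \<le> n" "1 \<le> j" "j + 1 < n" "i = j + 1"
  shows "aff_add (aff_br (2*n) \<kappa> (aff_br (2*n) \<kappa> (eE n i, 0) (eF n i, 0)) (eF n j, 0)) (aff_smul (of_int (-1)) (eF n j, 0)) = zaff"
  using assms apply (simp add: csimps split del: if_split)
  apply (simp add: zaff_eq evals split del: if_split)
  done

lemma C3_LLdn_0: assumes "3 \<le> n" "1 \<le> j" "j + 1 < n" "i = j + 1"
  shows "(aff_br (2*n) \<kappa> (eE n i, 0) (eF n j, 0)) = zaff"
  using assms apply (simp add: csimps split del: if_split)
  apply (simp add: zaff_eq evals split del: if_split)
  done

lemma C3_LLdn_1: assumes "3 \<le> n" "1 \<le> j" "j + 1 < n" "i = j + 1"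
  shows "(aff_br (2*n) \<kappa> (eF n i, 0) (eE n j, 0)) = zaff"
  using assms apply (simp add: csimps split del: if_split)
  apply (simp add: zaff_eq evals split del: if_split)
  done

lemma C3_LLdn_2: assumes "3 \<le> n" "1 \<le> j" "j + 1 < n" "i = j + 1"
  shows "(((aff_br (2*n) \<kappa> (eE n i, 0)) ^^ 2) (eE n j, 0)) = zaff"
  using assms apply (simp add: csimps split del: if_split)
  apply (simp add: zaff_eq evals split del: if_split)
  done

lemma C3_LLdn_3: assumes "3 \<le> n" "1 \<le> j" "j + 1 < n" "i = j + 1"
  shows "(((aff_br (2*n) \<kappa> (eF n i, 0)) ^^ 2) (eF n j, 0)) = zaff"
  using assms apply (simp add: csimps split del: if_split)
  apply (simp add: zaff_eq evals split del: if_split)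
  done

lemma C1_LLf1: assumes "3 \<le> n" "1 \<le> i" "i + 1 < j" "j < n"
  shows "aff_add (aff_br (2*n) \<kappa> (aff_br (2*n) \<kappa> (eE n i, 0) (eF n i, 0)) (eE n j, 0)) (aff_smul (-1) (aff_smul (of_int (0)) (eE n j, 0))) = zaff"
  using assms apply (simp add: csimps split del: if_split)
  apply (simp add: zaff_eq evals split del: if_split)
  done

lemma C2_LLf1: assumes "3 \<le> n" "1 \<le> i" "i + 1 < j" "j < n"
  shows "aff_add (aff_br (2*n) \<kappa> (aff_br (2*n) \<kappa> (eE n i, 0) (eF n i, 0)) (eF n j, 0)) (aff_smul (of_int (0)) (eF n j, 0)) = zaff"
  using assms apply (simp add: csimps split del: if_split)
  apply (simp add: zaff_eq evals split del: if_split)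
  done

lemma C3_LLf1_0: assumes "3 \<le> n" "1 \<le> i" "i + 1 < j" "j < n"
  shows "(aff_br (2*n) \<kappa> (eE n i, 0) (eF n j, 0)) = zaff"
  using assms apply (simp add: csimps split del: if_split)
  apply (simp add: zaff_eq evals split del: if_split)
  done

lemma C3_LLf1_1: assumes "3 \<le> n" "1 \<le> i" "i + 1 < j" "j < n"
  shows "(aff_br (2*n) \<kappa> (eF n i, 0) (eE n j, 0)) = zaff"
  using assms apply (simp add: csimps split del: if_split)
  apply (simp add: zaff_eq evals split del: if_split)
  done

lemma C3_LLf1_2: assumes "3 \<le> n" "1 \<le> i" "i + 1 < j" "j < n"
  shows "(((aff_br (2*n) \<kappa> (eE n i, 0)) ^^ 1) (eE n j, 0)) = zaff"
  using assms apply (simp add: csimps split del: if_split)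
  apply (simp add: zaff_eq evals split del: if_split)
  done

lemma C3_LLf1_3: assumes "3 \<le> n" "1 \<le> i" "i + 1 < j" "j < n"
  shows "(((aff_br (2*n) \<kappa> (eF n i, 0)) ^^ 1) (eF n j, 0)) = zaff"
  using assms apply (simp add: csimps split del: if_split)
  apply (simp add: zaff_eq evals split del: if_split)
  done

lemma C1_LLf2: assumes "3 \<le> n" "1 \<le> j" "j + 1 < i" "i < n"
  shows "aff_add (aff_br (2*n) \<kappa> (aff_br (2*n) \<kappa> (eE n i, 0) (eF n i, 0)) (eE n j, 0)) (aff_smul (-1) (aff_smul (of_int (0)) (eE n j, 0))) = zaff"
  using assms apply (simp add: csimps split del: if_split)
  apply (simp add: zaff_eq evals split del: if_split)
  done

lemma C2_LLf2: assumes "3 \<le> n" "1 \<le> j" "j + 1 < i" "i < n"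
  shows "aff_add (aff_br (2*n) \<kappa> (aff_br (2*n) \<kappa> (eE n i, 0) (eF n i, 0)) (eF n j, 0)) (aff_smul (of_int (0)) (eF n j, 0)) = zaff"
  using assms apply (simp add: csimps split del: if_split)
  apply (simp add: zaff_eq evals split del: if_split)
  done

lemma C3_LLf2_0: assumes "3 \<le> n" "1 \<le> j" "j + 1 < i" "i < n"
  shows "(aff_br (2*n) \<kappa> (eE n i, 0) (eF n j, 0)) = zaff"
  using assms apply (simp add: csimps split del: if_split)
  apply (simp add: zaff_eq evals split del: if_split)
  done

lemma C3_LLf2_1: assumes "3 \<le> n" "1 \<le> j" "j + 1 < i" "i < n"
  shows "(aff_br (2*n) \<kappa> (eF n i, 0) (eE n j, 0)) = zaff"
  using assms apply (simp add: csimps split del: if_split)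
  apply (simp add: zaff_eq evals split del: if_split)
  done

lemma C3_LLf2_2: assumes "3 \<le> n" "1 \<le> j" "j + 1 < i" "i < n"
  shows "(((aff_br (2*n) \<kappa> (eE n i, 0)) ^^ 1) (eE n j, 0)) = zaff"
  using assms apply (simp add: csimps split del: if_split)
  apply (simp add: zaff_eq evals split del: if_split)
  done

lemma C3_LLf2_3: assumes "3 \<le> n" "1 \<le> j" "j + 1 < i" "i < n"
  shows "(((aff_br (2*n) \<kappa> (eF n i, 0)) ^^ 1) (eF n j, 0)) = zaff"
  using assms apply (simp add: csimps split del: if_split)
  apply (simp add: zaff_eq evals split del: if_split)
  done

lemma C1_LNadj: assumes "3 \<le> n" "1 \<le> i" "n = i + 1" "j = n"
  shows "aff_add (aff_br (2*n) \<kappa> (aff_br (2*n) \<kappa> (eE n i, 0) (eF n i, 0)) (eE n j, 0)) (aff_smul (-1) (aff_smul (of_int (-1)) (eE n j, 0))) = zaff"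
  using assms apply (simp add: csimps split del: if_split)
  apply (simp add: zaff_eq evals split del: if_split)
  done

lemma C2_LNadj: assumes "3 \<le> n" "1 \<le> i" "n = i + 1" "j = n"
  shows "aff_add (aff_br (2*n) \<kappa> (aff_br (2*n) \<kappa> (eE n i, 0) (eF n i, 0)) (eF n j, 0)) (aff_smul (of_int (-1)) (eF n j, 0)) = zaff"
  using assms apply (simp add: csimps split del: if_split)
  apply (simp add: zaff_eq evals split del: if_split)
  done

lemma C3_LNadj_0: assumes "3 \<le> n" "1 \<le> i" "n = i + 1" "j = n"
  shows "(aff_br (2*n) \<kappa> (eE n i, 0) (eF n j, 0)) = zaff"
  using assms apply (simp add: csimps split del: if_split)
  apply (simp add: zaff_eq evals split del: if_split)
  done

lemma C3_LNadj_1: assumes "3 \<le> n" "1 \<le> i" "n = i + 1" "j = n"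
  shows "(aff_br (2*n) \<kappa> (eF n i, 0) (eE n j, 0)) = zaff"
  using assms apply (simp add: csimps split del: if_split)
  apply (simp add: zaff_eq evals split del: if_split)
  done

lemma C3_LNadj_2: assumes "3 \<le> n" "1 \<le> i" "n = i + 1" "j = n"
  shows "(((aff_br (2*n) \<kappa> (eE n i, 0)) ^^ 2) (eE n j, 0)) = zaff"
  using assms apply (simp add: csimps split del: if_split)
  apply (simp add: zaff_eq evals split del: if_split)
  done

lemma C3_LNadj_3: assumes "3 \<le> n" "1 \<le> i" "n = i + 1" "j = n"
  shows "(((aff_br (2*n) \<kappa> (eF n i, 0)) ^^ 2) (eF n j, 0)) = zaff"
  using assms apply (simp add: csimps split del: if_split)
  apply (simp add: zaff_eq evals split del: if_split)
  done

lemma C1_LNone: assumes "3 \<le> n" "i = 1" "j = n"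
  shows "aff_add (aff_br (2*n) \<kappa> (aff_br (2*n) \<kappa> (eE n i, 0) (eF n i, 0)) (eE n j, 0)) (aff_smul (-1) (aff_smul (of_int (1)) (eE n j, 0))) = zaff"
  using assms apply (simp add: csimps split del: if_split)
  apply (simp add: zaff_eq evals split del: if_split)
  done

lemma C2_LNone: assumes "3 \<le> n" "i = 1" "j = n"
  shows "aff_add (aff_br (2*n) \<kappa> (aff_br (2*n) \<kappa> (eE n i, 0) (eF n i, 0)) (eF n j, 0)) (aff_smul (of_int (1)) (eF n j, 0)) = zaff"
  using assms apply (simp add: csimps split del: if_split)
  apply (simp add: zaff_eq evals split del: if_split)
  done

lemma C5_LNone_0: assumes "3 \<le> n" "i = 1" "j = n"
  shows "(aff_br (2*n) \<kappa> (eE n i, 0) (eE n j, 0)) = zaff"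
  using assms apply (simp add: csimps split del: if_split)
  apply (simp add: zaff_eq evals split del: if_split)
  done

lemma C5_LNone_1: assumes "3 \<le> n" "i = 1" "j = n"
  shows "(aff_br (2*n) \<kappa> (eF n i, 0) (eF n j, 0)) = zaff"
  using assms apply (simp add: csimps split del: if_split)
  apply (simp add: zaff_eq evals split del: if_split)
  done

lemma C5_LNone_2: assumes "3 \<le> n" "i = 1" "j = n"
  shows "(((aff_br (2*n) \<kappa> (eE n i, 0)) ^^ 2) (eF n j, 0)) = zaff"
  using assms apply (simp add: csimps split del: if_split)
  apply (simp add: zaff_eq evals split del: if_split)
  done

lemma C5_LNone_3: assumes "3 \<le> n" "i = 1" "j = n"
  shows "(((aff_br (2*n) \<kappa> (eF n i, 0)) ^^ 2) (eE n j, 0)) = zaff"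
  using assms apply (simp add: csimps split del: if_split)
  apply (simp add: zaff_eq evals split del: if_split)
  done

lemma C1_LNmid: assumes "3 \<le> n" "2 \<le> i" "i + 2 \<le> n" "j = n"
  shows "aff_add (aff_br (2*n) \<kappa> (aff_br (2*n) \<kappa> (eE n i, 0) (eF n i, 0)) (eE n j, 0)) (aff_smul (-1) (aff_smul (of_int (0)) (eE n j, 0))) = zaff"
  using assms apply (simp add: csimps split del: if_split)
  apply (simp add: zaff_eq evals split del: if_split)
  done

lemma C2_LNmid: assumes "3 \<le> n" "2 \<le> i" "i + 2 \<le> n" "j = n"
  shows "aff_add (aff_br (2*n) \<kappa> (aff_br (2*n) \<kappa> (eE n i, 0) (eF n i, 0)) (eF n j, 0)) (aff_smul (of_int (0)) (eF n j, 0)) = zaff"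
  using assms apply (simp add: csimps split del: if_split)
  apply (simp add: zaff_eq evals split del: if_split)
  done

lemma C3_LNmid_0: assumes "3 \<le> n" "2 \<le> i" "i + 2 \<le> n" "j = n"
  shows "(aff_br (2*n) \<kappa> (eE n i, 0) (eF n j, 0)) = zaff"
  using assms apply (simp add: csimps split del: if_split)
  apply (simp add: zaff_eq evals split del: if_split)
  done

lemma C3_LNmid_1: assumes "3 \<le> n" "2 \<le> i" "i + 2 \<le> n" "j = n"
  shows "(aff_br (2*n) \<kappa> (eF n i, 0) (eE n j, 0)) = zaff"
  using assms apply (simp add: csimps split del: if_split)
  apply (simp add: zaff_eq evals split del: if_split)
  done

lemma C3_LNmid_2: assumes "3 \<le> n" "2 \<le> i" "i + 2 \<le> n" "j = n"
  shows "(((aff_br (2*n) \<kappa> (eE n i, 0)) ^^ 1) (eE n j, 0)) = zaff"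
  using assms apply (simp add: csimps split del: if_split)
  apply (simp add: zaff_eq evals split del: if_split)
  done

lemma C3_LNmid_3: assumes "3 \<le> n" "2 \<le> i" "i + 2 \<le> n" "j = n"
  shows "(((aff_br (2*n) \<kappa> (eF n i, 0)) ^^ 1) (eF n j, 0)) = zaff"
  using assms apply (simp add: csimps split del: if_split)
  apply (simp add: zaff_eq evals split del: if_split)
  done

lemma C1_NLadj: assumes "3 \<le> n" "1 \<le> j" "n = j + 1" "i = n"
  shows "aff_add (aff_br (2*n) \<kappa> (aff_br (2*n) \<kappa> (eE n i, 0) (eF n i, 0)) (eE n j, 0)) (aff_smul (-1) (aff_smul (of_int (-1)) (eE n j, 0))) = zaff"
  using assms apply (simp add: csimps split del: if_split)
  apply (simp add: zaff_eq evals split del: if_split)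
  done

lemma C2_NLadj: assumes "3 \<le> n" "1 \<le> j" "n = j + 1" "i = n"
  shows "aff_add (aff_br (2*n) \<kappa> (aff_br (2*n) \<kappa> (eE n i, 0) (eF n i, 0)) (eF n j, 0)) (aff_smul (of_int (-1)) (eF n j, 0)) = zaff"
  using assms apply (simp add: csimps split del: if_split)
  apply (simp add: zaff_eq evals split del: if_split)
  done

lemma C3_NLadj_0: assumes "3 \<le> n" "1 \<le> j" "n = j + 1" "i = n"
  shows "(aff_br (2*n) \<kappa> (eE n i, 0) (eF n j, 0)) = zaff"
  using assms apply (simp add: csimps split del: if_split)
  apply (simp add: zaff_eq evals split del: if_split)
  done

lemma C3_NLadj_1: assumes "3 \<le> n" "1 \<le> j" "n = j + 1" "i = n"
  shows "(aff_br (2*n) \<kappa> (eF n i, 0) (eE n j, 0)) = zaff"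
  using assms apply (simp add: csimps split del: if_split)
  apply (simp add: zaff_eq evals split del: if_split)
  done

lemma C3_NLadj_2: assumes "3 \<le> n" "1 \<le> j" "n = j + 1" "i = n"
  shows "(((aff_br (2*n) \<kappa> (eE n i, 0)) ^^ 2) (eE n j, 0)) = zaff"
  using assms apply (simp add: csimps split del: if_split)
  apply (simp add: zaff_eq evals split del: if_split)
  done

lemma C3_NLadj_3: assumes "3 \<le> n" "1 \<le> j" "n = j + 1" "i = n"
  shows "(((aff_br (2*n) \<kappa> (eF n i, 0)) ^^ 2) (eF n j, 0)) = zaff"
  using assms apply (simp add: csimps split del: if_split)
  apply (simp add: zaff_eq evals split del: if_split)
  done

lemma C1_NLone: assumes "3 \<le> n" "j = 1" "i = n"
  shows "aff_add (aff_br (2*n) \<kappa> (aff_br (2*n) \<kappa> (eE n i, 0) (eF n i, 0)) (eE n j, 0)) (aff_smul (-1) (aff_smul (of_int (1)) (eE n j, 0))) = zaff"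
  using assms apply (simp add: csimps split del: if_split)
  apply (simp add: zaff_eq evals split del: if_split)
  done

lemma C2_NLone: assumes "3 \<le> n" "j = 1" "i = n"
  shows "aff_add (aff_br (2*n) \<kappa> (aff_br (2*n) \<kappa> (eE n i, 0) (eF n i, 0)) (eF n j, 0)) (aff_smul (of_int (1)) (eF n j, 0)) = zaff"
  using assms apply (simp add: csimps split del: if_split)
  apply (simp add: zaff_eq evals split del: if_split)
  done

lemma C5_NLone_0: assumes "3 \<le> n" "j = 1" "i = n"
  shows "(aff_br (2*n) \<kappa> (eE n i, 0) (eE n j, 0)) = zaff"
  using assms apply (simp add: csimps split del: if_split)
  apply (simp add: zaff_eq evals split del: if_split)
  done

lemma C5_NLone_1: assumes "3 \<le> n" "j = 1" "i = n"
  shows "(aff_br (2*n) \<kappa> (eF n i, 0) (eF n j, 0)) = zaff"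
  using assms apply (simp add: csimps split del: if_split)
  apply (simp add: zaff_eq evals split del: if_split)
  done

lemma C5_NLone_2: assumes "3 \<le> n" "j = 1" "i = n"
  shows "(((aff_br (2*n) \<kappa> (eE n i, 0)) ^^ 2) (eF n j, 0)) = zaff"
  using assms apply (simp add: csimps split del: if_split)
  apply (simp add: zaff_eq evals split del: if_split)
  done

lemma C5_NLone_3: assumes "3 \<le> n" "j = 1" "i = n"
  shows "(((aff_br (2*n) \<kappa> (eF n i, 0)) ^^ 2) (eE n j, 0)) = zaff"
  using assms apply (simp add: csimps split del: if_split)
  apply (simp add: zaff_eq evals split del: if_split)
  done

lemma C1_NLmid: assumes "3 \<le> n" "2 \<le> j" "j + 2 \<le> n" "i = n"
  shows "aff_add (aff_br (2*n) \<kappa> (aff_br (2*n) \<kappa> (eE n i, 0) (eF n i, 0)) (eE n j, 0)) (aff_smul (-1) (aff_smul (of_int (0)) (eE n j, 0))) = zaff"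
  using assms apply (simp add: csimps split del: if_split)
  apply (simp add: zaff_eq evals split del: if_split)
  done

lemma C2_NLmid: assumes "3 \<le> n" "2 \<le> j" "j + 2 \<le> n" "i = n"
  shows "aff_add (aff_br (2*n) \<kappa> (aff_br (2*n) \<kappa> (eE n i, 0) (eF n i, 0)) (eF n j, 0)) (aff_smul (of_int (0)) (eF n j, 0)) = zaff"
  using assms apply (simp add: csimps split del: if_split)
  apply (simp add: zaff_eq evals split del: if_split)
  done

lemma C3_NLmid_0: assumes "3 \<le> n" "2 \<le> j" "j + 2 \<le> n" "i = n"
  shows "(aff_br (2*n) \<kappa> (eE n i, 0) (eF n j, 0)) = zaff"
  using assms apply (simp add: csimps split del: if_split)
  apply (simp add: zaff_eq evals split del: if_split)
  done

lemma C3_NLmid_1: assumes "3 \<le> n" "2 \<le> j" "j + 2 \<le> n" "i = n"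
  shows "(aff_br (2*n) \<kappa> (eF n i, 0) (eE n j, 0)) = zaff"
  using assms apply (simp add: csimps split del: if_split)
  apply (simp add: zaff_eq evals split del: if_split)
  done

lemma C3_NLmid_2: assumes "3 \<le> n" "2 \<le> j" "j + 2 \<le> n" "i = n"
  shows "(((aff_br (2*n) \<kappa> (eE n i, 0)) ^^ 1) (eE n j, 0)) = zaff"
  using assms apply (simp add: csimps split del: if_split)
  apply (simp add: zaff_eq evals split del: if_split)
  done

lemma C3_NLmid_3: assumes "3 \<le> n" "2 \<le> j" "j + 2 \<le> n" "i = n"
  shows "(((aff_br (2*n) \<kappa> (eF n i, 0)) ^^ 1) (eF n j, 0)) = zaff"
  using assms apply (simp add: csimps split del: if_split)
  apply (simp add: zaff_eq evals split del: if_split)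
  done

lemma C1_NN: assumes "3 \<le> n" "i = n" "j = n"
  shows "aff_add (aff_br (2*n) \<kappa> (aff_br (2*n) \<kappa> (eE n i, 0) (eF n i, 0)) (eE n j, 0)) (aff_smul (-1) (aff_smul (of_int (2)) (eE n j, 0))) = zaff"
  using assms apply (simp add: csimps split del: if_split)
  apply (simp add: zaff_eq evals split del: if_split)
  done

lemma C2_NN: assumes "3 \<le> n" "i = n" "j = n"
  shows "aff_add (aff_br (2*n) \<kappa> (aff_br (2*n) \<kappa> (eE n i, 0) (eF n i, 0)) (eF n j, 0)) (aff_smul (of_int (2)) (eF n j, 0)) = zaff"
  using assms apply (simp add: csimps split del: if_split)
  apply (simp add: zaff_eq evals split del: if_split)
  done


abbreviation HH where "HH n \<kappa> i \<equiv> aff_br (2*n) \<kappa> (hat_e n i) (hat_f n i)"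

lemma case_split12:
  fixes n i j :: nat
  assumes "3 \<le> n" "i \<in> {1..n}" "j \<in> {1..n}"
  obtains (LLeq) "1 \<le> i" "i < n" "j = i" | (LLup) "1 \<le> i" "i + 1 < n" "j = i + 1" | (LLdn) "1 \<le> j" "j + 1 < n" "i = j + 1" | (LLf1) "1 \<le> i" "i + 1 < j" "j < n" | (LLf2) "1 \<le> j" "j + 1 < i" "i < n" | (LNadj) "1 \<le> i" "n = i + 1" "j = n" | (LNone) "i = 1" "j = n" | (LNmid) "2 \<le> i" "i + 2 \<le> n" "j = n" | (NLadj) "1 \<le> j" "n = j + 1" "i = n" | (NLone) "j = 1" "i = n" | (NLmid) "2 \<le> j" "j + 2 \<le> n" "i = n" | (NN) "i = n" "j = n"
proof -
  have r: "1 \<le> i" "i \<le> n" "1 \<le> j" "j \<le> n" using assms by auto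
  have d: "(i < n \<and> j < n) \<or> (i < n \<and> j = n) \<or> (i = n \<and> j < n) \<or> (i = n \<and> j = n)" using r by arith
  then consider "i < n" "j < n" | "i < n" "j = n" | "i = n" "j < n" | "i = n" "j = n" by blast
  then show thesis
  proof cases
    case 1
    then have "(1 \<le> i \<and> i < n \<and> j = i) \<or> (1 \<le> i \<and> i + 1 < n \<and> j = i + 1) \<or> (1 \<le> j \<and> j + 1 < n \<and> i = j + 1) \<or> (1 \<le> i \<and> i + 1 < j \<and> j < n) \<or> (1 \<le> j \<and> j + 1 < i \<and> i < n)" using r assms(1) by arith
    then consider "1 \<le> i" "i < n" "j = i" | "1 \<le> i" "i + 1 < n" "j = i + 1" | "1 \<le> j" "j + 1 < n" "i = j + 1" | "1 \<le> i" "i + 1 < j" "j < n" | "1 \<le> j" "j + 1 < i" "i < n" by blast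
    then show thesis
    proof cases
      case 1 then show thesis by (rule LLeq)
    next
      case 2 then show thesis by (rule LLup)
    next
      case 3 then show thesis by (rule LLdn)
    next
      case 4 then show thesis by (rule LLf1)
    next
      case 5 then show thesis by (rule LLf2)
    qed
  next
    case 2
    then have "(1 \<le> i \<and> n = i + 1 \<and> j = n) \<or> (i = 1 \<and> j = n) \<or> (2 \<le> i \<and> i + 2 \<le> n \<and> j = n)" using r assms(1) by arith
    then consider "1 \<le> i" "n = i + 1" "j = n" | "i = 1" "j = n" | "2 \<le> i" "i + 2 \<le> n" "j = n" by blast
    then show thesis
    proof cases
      case 1 then show thesis by (rule LNadj)
    next
      case 2 then show thesis by (rule LNone)
    next
      case 3 then show thesis by (rule LNmid)
    qed
  next
    case 3
    then have "(1 \<le> j \<and> n = j + 1 \<and> i = n) \<or> (j = 1 \<and> i = n) \<or> (2 \<le> j \<and> j + 2 \<le> n \<and> i = n)" using r assms(1) by arith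
    then consider "1 \<le> j" "n = j + 1" "i = n" | "j = 1" "i = n" | "2 \<le> j" "j + 2 \<le> n" "i = n" by blast
    then show thesis
    proof cases
      case 1 then show thesis by (rule NLadj)
    next
      case 2 then show thesis by (rule NLone)
    next
      case 3 then show thesis by (rule NLmid)
    qed
  next
    case 4
    then show thesis using r assms by (intro NN) simp_all
  qed
qed

lemma Mn_LLeq: fixes n i j :: nat assumes "3 \<le> n" "1 \<le> i" "i < n" "j = i" shows "Mn n i j = 2"
  using assms by (auto simp: Mn_def)

lemma Mn_LLup: fixes n i j :: nat assumes "3 \<le> n" "1 \<le> i" "i + 1 < n" "j = i + 1" shows "Mn n i j = -1"
  using assms by (auto simp: Mn_def)

lemma Mn_LLdn: fixes n i j :: nat assumes "3 \<le> n" "1 \<le> j" "j + 1 < n" "i = j + 1" shows "Mn n i j = -1"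
  using assms by (auto simp: Mn_def)

lemma Mn_LLf1: fixes n i j :: nat assumes "3 \<le> n" "1 \<le> i" "i + 1 < j" "j < n" shows "Mn n i j = 0"
  using assms by (auto simp: Mn_def)

lemma Mn_LLf2: fixes n i j :: nat assumes "3 \<le> n" "1 \<le> j" "j + 1 < i" "i < n" shows "Mn n i j = 0"
  using assms by (auto simp: Mn_def)

lemma Mn_LNadj: fixes n i j :: nat assumes "3 \<le> n" "1 \<le> i" "n = i + 1" "j = n" shows "Mn n i j = -1"
  using assms by (auto simp: Mn_def)

lemma Mn_LNone: fixes n i j :: nat assumes "3 \<le> n" "i = 1" "j = n" shows "Mn n i j = 1"
  using assms by (auto simp: Mn_def)

lemma Mn_LNmid: fixes n i j :: nat assumes "3 \<le> n" "2 \<le> i" "i + 2 \<le> n" "j = n" shows "Mn n i j = 0"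
  using assms by (auto simp: Mn_def)

lemma Mn_NLadj: fixes n i j :: nat assumes "3 \<le> n" "1 \<le> j" "n = j + 1" "i = n" shows "Mn n i j = -1"
  using assms by (auto simp: Mn_def)

lemma Mn_NLone: fixes n i j :: nat assumes "3 \<le> n" "j = 1" "i = n" shows "Mn n i j = 1"
  using assms by (auto simp: Mn_def)

lemma Mn_NLmid: fixes n i j :: nat assumes "3 \<le> n" "2 \<le> j" "j + 2 \<le> n" "i = n" shows "Mn n i j = 0"
  using assms by (auto simp: Mn_def)

lemma Mn_NN: fixes n i j :: nat assumes "3 \<le> n" "i = n" "j = n" shows "Mn n i j = 2"
  using assms by (auto simp: Mn_def)

lemma C1: assumes n: "n \<ge> 3" and i: "i \<in> {1..n}" and j: "j \<in> {1..n}"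
  shows "aff_add (aff_br (2*n) \<kappa> (HH n \<kappa> i) (hat_e n j)) (aff_smul (-1) (aff_smul (of_int (Mn n i j)) (hat_e n j))) = zaff"
proof -
  have hs: "hat_e n i = (eE n i, 0)" "hat_f n i = (eF n i, 0)" "hat_e n j = (eE n j, 0)" "hat_f n j = (eF n j, 0)"
    using i j by (simp_all add: hat_e_eq hat_f_eq)
  show ?thesis
    using n i j
  proof (cases rule: case_split12)
    case LLeq
    show ?thesis unfolding hs Mn_LLeq[OF n LLeq] by (rule C1_LLeq[OF n LLeq])
  next
    case LLup
    show ?thesis unfolding hs Mn_LLup[OF n LLup] by (rule C1_LLup[OF n LLup])
  next
    case LLdn
    show ?thesis unfolding hs Mn_LLdn[OF n LLdn] by (rule C1_LLdn[OF n LLdn])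
  next
    case LLf1
    show ?thesis unfolding hs Mn_LLf1[OF n LLf1] by (rule C1_LLf1[OF n LLf1])
  next
    case LLf2
    show ?thesis unfolding hs Mn_LLf2[OF n LLf2] by (rule C1_LLf2[OF n LLf2])
  next
    case LNadj
    show ?thesis unfolding hs Mn_LNadj[OF n LNadj] by (rule C1_LNadj[OF n LNadj])
  next
    case LNone
    show ?thesis unfolding hs Mn_LNone[OF n LNone] by (rule C1_LNone[OF n LNone])
  next
    case LNmid
    show ?thesis unfolding hs Mn_LNmid[OF n LNmid] by (rule C1_LNmid[OF n LNmid])
  next
    case NLadj
    show ?thesis unfolding hs Mn_NLadj[OF n NLadj] by (rule C1_NLadj[OF n NLadj])
  next
    case NLone
    show ?thesis unfolding hs Mn_NLone[OF n NLone] by (rule C1_NLone[OF n NLone])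
  next
    case NLmid
    show ?thesis unfolding hs Mn_NLmid[OF n NLmid] by (rule C1_NLmid[OF n NLmid])
  next
    case NN
    show ?thesis unfolding hs Mn_NN[OF n NN] by (rule C1_NN[OF n NN])
  qed
qed

lemma C2: assumes n: "n \<ge> 3" and i: "i \<in> {1..n}" and j: "j \<in> {1..n}"
  shows "aff_add (aff_br (2*n) \<kappa> (HH n \<kappa> i) (hat_f n j)) (aff_smul (of_int (Mn n i j)) (hat_f n j)) = zaff"
proof -
  have hs: "hat_e n i = (eE n i, 0)" "hat_f n i = (eF n i, 0)" "hat_e n j = (eE n j, 0)" "hat_f n j = (eF n j, 0)"
    using i j by (simp_all add: hat_e_eq hat_f_eq)
  show ?thesis
    using n i j
  proof (cases rule: case_split12)
    case LLeq
    show ?thesis unfolding hs Mn_LLeq[OF n LLeq] by (rule C2_LLeq[OF n LLeq])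
  next
    case LLup
    show ?thesis unfolding hs Mn_LLup[OF n LLup] by (rule C2_LLup[OF n LLup])
  next
    case LLdn
    show ?thesis unfolding hs Mn_LLdn[OF n LLdn] by (rule C2_LLdn[OF n LLdn])
  next
    case LLf1
    show ?thesis unfolding hs Mn_LLf1[OF n LLf1] by (rule C2_LLf1[OF n LLf1])
  next
    case LLf2
    show ?thesis unfolding hs Mn_LLf2[OF n LLf2] by (rule C2_LLf2[OF n LLf2])
  next
    case LNadj
    show ?thesis unfolding hs Mn_LNadj[OF n LNadj] by (rule C2_LNadj[OF n LNadj])
  next
    case LNone
    show ?thesis unfolding hs Mn_LNone[OF n LNone] by (rule C2_LNone[OF n LNone])
  next
    case LNmid
    show ?thesis unfolding hs Mn_LNmid[OF n LNmid] by (rule C2_LNmid[OF n LNmid])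
  next
    case NLadj
    show ?thesis unfolding hs Mn_NLadj[OF n NLadj] by (rule C2_NLadj[OF n NLadj])
  next
    case NLone
    show ?thesis unfolding hs Mn_NLone[OF n NLone] by (rule C2_NLone[OF n NLone])
  next
    case NLmid
    show ?thesis unfolding hs Mn_NLmid[OF n NLmid] by (rule C2_NLmid[OF n NLmid])
  next
    case NN
    show ?thesis unfolding hs Mn_NN[OF n NN] by (rule C2_NN[OF n NN])
  qed
qed

lemma C3: assumes n: "n \<ge> 3" and i: "i \<in> {1..n}" and j: "j \<in> {1..n}" and "i \<noteq> j" and "Mn n i j \<le> 0"
  shows "aff_br (2*n) \<kappa> (hat_e n i) (hat_f n j) = zaff \<and> aff_br (2*n) \<kappa> (hat_f n i) (hat_e n j) = zaff \<and>
  ((aff_br (2*n) \<kappa> (hat_e n i)) ^^ nat (1 - Mn n i j)) (hat_e n j) = zaff \<and>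
  ((aff_br (2*n) \<kappa> (hat_f n i)) ^^ nat (1 - Mn n i j)) (hat_f n j) = zaff"
proof -
  have hs: "hat_e n i = (eE n i, 0)" "hat_f n i = (eF n i, 0)" "hat_e n j = (eE n j, 0)" "hat_f n j = (eF n j, 0)"
    using i j by (simp_all add: hat_e_eq hat_f_eq)
  show ?thesis
    using n i j
  proof (cases rule: case_split12)
    case LLeq
    then show ?thesis using assms Mn_LLeq[OF n LLeq] by simp
  next
    case LLup
    have m: "Mn n i j = -1" by (rule Mn_LLup[OF n LLup])
    show ?thesis unfolding hs m using C3_LLup_0[OF n LLup] C3_LLup_1[OF n LLup] C3_LLup_2[OF n LLup] C3_LLup_3[OF n LLup] by simp
  next
    case LLdn
    have m: "Mn n i j = -1" by (rule Mn_LLdn[OF n LLdn])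
    show ?thesis unfolding hs m using C3_LLdn_0[OF n LLdn] C3_LLdn_1[OF n LLdn] C3_LLdn_2[OF n LLdn] C3_LLdn_3[OF n LLdn] by simp
  next
    case LLf1
    have m: "Mn n i j = 0" by (rule Mn_LLf1[OF n LLf1])
    show ?thesis unfolding hs m using C3_LLf1_0[OF n LLf1] C3_LLf1_1[OF n LLf1] C3_LLf1_2[OF n LLf1] C3_LLf1_3[OF n LLf1] by simp
  next
    case LLf2
    have m: "Mn n i j = 0" by (rule Mn_LLf2[OF n LLf2])
    show ?thesis unfolding hs m using C3_LLf2_0[OF n LLf2] C3_LLf2_1[OF n LLf2] C3_LLf2_2[OF n LLf2] C3_LLf2_3[OF n LLf2] by simp
  next
    case LNadj
    have m: "Mn n i j = -1" by (rule Mn_LNadj[OF n LNadj])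
    show ?thesis unfolding hs m using C3_LNadj_0[OF n LNadj] C3_LNadj_1[OF n LNadj] C3_LNadj_2[OF n LNadj] C3_LNadj_3[OF n LNadj] by simp
  next
    case LNone
    then show ?thesis using assms Mn_LNone[OF n LNone] by simp
  next
    case LNmid
    have m: "Mn n i j = 0" by (rule Mn_LNmid[OF n LNmid])
    show ?thesis unfolding hs m using C3_LNmid_0[OF n LNmid] C3_LNmid_1[OF n LNmid] C3_LNmid_2[OF n LNmid] C3_LNmid_3[OF n LNmid] by simp
  next
    case NLadj
    have m: "Mn n i j = -1" by (rule Mn_NLadj[OF n NLadj])
    show ?thesis unfolding hs m using C3_NLadj_0[OF n NLadj] C3_NLadj_1[OF n NLadj] C3_NLadj_2[OF n NLadj] C3_NLadj_3[OF n NLadj] by simp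
  next
    case NLone
    then show ?thesis using assms Mn_NLone[OF n NLone] by simp
  next
    case NLmid
    have m: "Mn n i j = 0" by (rule Mn_NLmid[OF n NLmid])
    show ?thesis unfolding hs m using C3_NLmid_0[OF n NLmid] C3_NLmid_1[OF n NLmid] C3_NLmid_2[OF n NLmid] C3_NLmid_3[OF n NLmid] by simp
  next
    case NN
    then show ?thesis using assms Mn_NN[OF n NN] by simp
  qed
qed

lemma C5: assumes n: "n \<ge> 3" and i: "i \<in> {1..n}" and j: "j \<in> {1..n}" and "i \<noteq> j" and "Mn n i j > 0"
  shows "aff_br (2*n) \<kappa> (hat_e n i) (hat_e n j) = zaff \<and> aff_br (2*n) \<kappa> (hat_f n i) (hat_f n j) = zaff \<and>
  ((aff_br (2*n) \<kappa> (hat_e n i)) ^^ nat (Mn n i j + 1)) (hat_f n j) = zaff \<and>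
  ((aff_br (2*n) \<kappa> (hat_f n i)) ^^ nat (Mn n i j + 1)) (hat_e n j) = zaff"
proof -
  have hs: "hat_e n i = (eE n i, 0)" "hat_f n i = (eF n i, 0)" "hat_e n j = (eE n j, 0)" "hat_f n j = (eF n j, 0)"
    using i j by (simp_all add: hat_e_eq hat_f_eq)
  show ?thesis
    using n i j
  proof (cases rule: case_split12)
    case LLeq
    then show ?thesis using assms Mn_LLeq[OF n LLeq] by simp
  next
    case LLup
    then show ?thesis using assms Mn_LLup[OF n LLup] by simp
  next
    case LLdn
    then show ?thesis using assms Mn_LLdn[OF n LLdn] by simp
  next
    case LLf1
    then show ?thesis using assms Mn_LLf1[OF n LLf1] by simp
  next
    case LLf2
    then show ?thesis using assms Mn_LLf2[OF n LLf2] by simp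
  next
    case LNadj
    then show ?thesis using assms Mn_LNadj[OF n LNadj] by simp
  next
    case LNone
    have m: "Mn n i j = 1" by (rule Mn_LNone[OF n LNone])
    show ?thesis unfolding hs m using C5_LNone_0[OF n LNone] C5_LNone_1[OF n LNone] C5_LNone_2[OF n LNone] C5_LNone_3[OF n LNone] by simp
  next
    case LNmid
    then show ?thesis using assms Mn_LNmid[OF n LNmid] by simp
  next
    case NLadj
    then show ?thesis using assms Mn_NLadj[OF n NLadj] by simp
  next
    case NLone
    have m: "Mn n i j = 1" by (rule Mn_NLone[OF n NLone])
    show ?thesis unfolding hs m using C5_NLone_0[OF n NLone] C5_NLone_1[OF n NLone] C5_NLone_2[OF n NLone] C5_NLone_3[OF n NLone] by simp
  next
    case NLmid
    then show ?thesis using assms Mn_NLmid[OF n NLmid] by simp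
  next
    case NN
    then show ?thesis using assms Mn_NN[OF n NN] by simp
  qed
qed

lemma fin_gen[simp]: "finite (supp (fa_gen g))" by (simp add: supp_gen)
lemma fin_smul[simp]: "finite (supp x) \<Longrightarrow> finite (supp (fa_smul c x))"
  using finite_subset[OF supp_smul] by blast

lemma aff_add_neg: "aff_add x (aff_smul (-1) x) = zaff"
  by (simp add: aff_add_def aff_smul_def zaff_def madd_def fun_eq_iff)

lemma rels_psi:
  assumes n: "n \<ge> 3" and r: "r \<in> gim_rels n"
  shows "psiG n \<kappa> r = zaff"
  using r unfolding gim_rels_def
  apply (elim UnE CollectE exE conjE insertE)
  apply (simp_all add: psiG_sub psiG_add psiG_comm psiG_smul psiG_adpow fin_comm psiG_e psiG_f psiG_h)
  using n C1 C2 C3 C5 aff_add_neg by auto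


lemma aff_br_zaff: "aff_br N \<kappa> x zaff = zaff"
  by (simp add: aff_br_def zaff_def mbr_def msub_def mmul_def mtr_def fun_eq_iff)

lemma I_zero:
  assumes n: "n \<ge> 3" and x: "x \<in> gim_I n"
  shows "psiG n \<kappa> x = zaff"
  using x unfolding gim_I_def
proof (induction rule: fa_lie_ideal.induct)
  case (gen r) show ?case by (rule rels_psi[OF n gen])
next
  case zero then show ?case by (rule psiG_zero)
next
  case (add x y)
  then have "x \<in> gim_FL n" "y \<in> gim_FL n" using I_L n by (auto simp: gim_I_def)
  then have "finite (supp x)" "finite (supp y)" by (auto intro: FA_fin L_FA)
  then show ?case using add by (simp add: psiG_add aff_add_def zaff_def madd_def)
next
  case (smul x a)
  then have "x \<in> gim_FL n" using I_L n by (auto simp: gim_I_def)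
  then have "finite (supp x)" by (auto intro: FA_fin L_FA)
  then show ?case using smul by (simp add: psiG_smul aff_smul_def zaff_def)
next
  case (comm z x)
  then have "x \<in> gim_FL n" using I_L n by (auto simp: gim_I_def)
  then have "finite (supp x)" "finite (supp z)" using comm by (auto intro: FA_fin L_FA)
  then show ?case using comm by (simp add: psiG_comm aff_br_zaff)
qed

lemma hat_in: "i \<in> {1..n} \<Longrightarrow> hat_e n i \<in> g_fp n \<kappa> \<and> hat_f n i \<in> g_fp n \<kappa>"
  by (auto simp: g_fp_def intro: aff_lie_span.gen)

lemma psi_gfp:
  assumes x: "x \<in> gim_FL n"
  shows "psiG n \<kappa> x \<in> g_fp n \<kappa>"
  using x unfolding gim_FL_def
proof (induction rule: fa_lie_span.induct)
  case (gen s)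
  then obtain g where g: "g \<in> gim_gens n" "s = fa_gen g" by auto
  then obtain i where i: "i \<in> {1..n}" "g = GE i \<or> g = GF i \<or> g = GH i"
    by (auto simp: gim_gens_def)
  have h: "hat_e n i \<in> g_fp n \<kappa>" "hat_f n i \<in> g_fp n \<kappa>" using hat_in[OF i(1)] by auto
  from i(2) show ?case
  proof (elim disjE)
    assume "g = GH i"
    then show ?thesis using g h i(1) by (simp add: psiG_h g_fp_def aff_lie_span.br)
  qed (use g h i(1) in \<open>simp_all add: psiG_e psiG_f\<close>)
next
  case (add x y)
  then have "finite (supp x)" "finite (supp y)" by (auto intro: FA_fin span_FA)
  then show ?case using add
    by (simp add: psiG_add g_fp_def aff_lie_span.add)
next
  case (smul x a)
  then have "finite (supp x)" by (auto intro: FA_fin span_FA)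
  then show ?case using smul
    by (simp add: psiG_smul g_fp_def aff_lie_span.smul)
next
  case (comm x y)
  then have "finite (supp x)" "finite (supp y)" by (auto intro: FA_fin span_FA)
  then show ?case using comm
    by (simp add: psiG_comm g_fp_def aff_lie_span.br)
qed

definition sig :: "nat \<Rightarrow> complex \<Rightarrow> gimgen \<Rightarrow> aff" where
  "sig n \<kappa> g = psiG n \<kappa> (fa_gen g)"

definition PhiG :: "nat \<Rightarrow> complex \<Rightarrow> gimgen fa \<Rightarrow> aff fa" where
  "PhiG n \<kappa> p = (\<lambda>v. lin p (\<lambda>w. if map (sig n \<kappa>) w = v then 1 else 0))"

lemma Phi_add: "finite (supp p) \<Longrightarrow> finite (supp q) \<Longrightarrow> PhiG n \<kappa> (fa_add p q) = fa_add (PhiG n \<kappa> p) (PhiG n \<kappa> q)"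
proof (rule ext)
  fix v assume "finite (supp p)" "finite (supp q)"
  then show "PhiG n \<kappa> (fa_add p q) v = fa_add (PhiG n \<kappa> p) (PhiG n \<kappa> q) v"
    unfolding PhiG_def by (subst lin_add) (simp_all add: fa_add_def)
qed

lemma Phi_smul: "finite (supp p) \<Longrightarrow> PhiG n \<kappa> (fa_smul c p) = fa_smul c (PhiG n \<kappa> p)"
proof (rule ext)
  fix v assume "finite (supp p)"
  then show "PhiG n \<kappa> (fa_smul c p) v = fa_smul c (PhiG n \<kappa> p) v"
    unfolding PhiG_def by (subst lin_smul) (simp_all add: fa_smul_def)
qed

lemma Phi_sub: "finite (supp p) \<Longrightarrow> finite (supp q) \<Longrightarrow> PhiG n \<kappa> (fa_sub p q) = fa_sub (PhiG n \<kappa> p) (PhiG n \<kappa> q)"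
proof (rule ext)
  fix v assume "finite (supp p)" "finite (supp q)"
  then show "PhiG n \<kappa> (fa_sub p q) v = fa_sub (PhiG n \<kappa> p) (PhiG n \<kappa> q) v"
    unfolding PhiG_def by (subst lin_sub) (simp_all add: fa_sub_def)
qed

lemma Phi_one: "PhiG n \<kappa> fa_one = fa_one"
  unfolding PhiG_def lin_one by (auto simp: fa_one_def fun_eq_iff)

lemma Phi_zero: "PhiG n \<kappa> fa_zero = fa_zero"
  unfolding PhiG_def lin_zero by (simp add: fa_zero_def)

lemma Phi_gen: "PhiG n \<kappa> (fa_gen g) = fa_gen (sig n \<kappa> g)"
  unfolding PhiG_def lin_gen by (auto simp: fa_gen_def fun_eq_iff)

lemma Phi_mul:
  assumes fp: "finite (supp p)" and fq: "finite (supp q)"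
  shows "PhiG n \<kappa> (fa_mul p q) = fa_mul (PhiG n \<kappa> p) (PhiG n \<kappa> q)"
proof (rule ext)
  fix v
  let ?s = "map (sig n \<kappa>)"
  have "PhiG n \<kappa> (fa_mul p q) v = (\<Sum>u\<in>supp p. \<Sum>u'\<in>supp q. p u * q u' * (if ?s u @ ?s u' = v then 1 else 0))"
    by (simp add: PhiG_def lin_conv fp fq)
  also have "\<dots> = (\<Sum>u\<in>supp p. \<Sum>u'\<in>supp q. \<Sum>k\<le>length v. if take k v = ?s u \<and> drop k v = ?s u' then p u * q u' else 0)"
  proof (rule sum.cong[OF refl], rule sum.cong[OF refl])
    fix u u'
    show "p u * q u' * (if ?s u @ ?s u' = v then 1 else 0) =
      (\<Sum>k\<le>length v. if take k v = ?s u \<and> drop k v = ?s u' then p u * q u' else 0)"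
      by (subst sum_split_delta) auto
  qed
  also have "\<dots> = (\<Sum>k\<le>length v. \<Sum>u\<in>supp p. \<Sum>u'\<in>supp q. if take k v = ?s u \<and> drop k v = ?s u' then p u * q u' else 0)"
    by (rule sum_swap3[symmetric])
  also have "\<dots> = (\<Sum>k\<le>length v. \<Sum>u\<in>supp p. \<Sum>u'\<in>supp q. (p u * (if ?s u = take k v then 1 else 0)) * (q u' * (if ?s u' = drop k v then 1 else 0)))"
    by (intro sum.cong refl) auto
  also have "\<dots> = fa_mul (PhiG n \<kappa> p) (PhiG n \<kappa> q) v"
    unfolding fa_mul_def PhiG_def lin_def by (simp add: sum_product)
  finally show "PhiG n \<kappa> (fa_mul p q) v = fa_mul (PhiG n \<kappa> p) (PhiG n \<kappa> q) v" .
qed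


abbreviation KK where "KK n \<kappa> \<equiv> U_fp_K n \<kappa>"

lemma K_rel1: "x \<in> g_fp n \<kappa> \<Longrightarrow> y \<in> g_fp n \<kappa> \<Longrightarrow> fa_sub (fa_gen (aff_add x y)) (fa_add (fa_gen x) (fa_gen y)) \<in> KK n \<kappa>"
  unfolding U_fp_K_def by (rule fa_ideal.gen) blast
lemma K_rel2: "x \<in> g_fp n \<kappa> \<Longrightarrow> fa_sub (fa_gen (aff_smul a x)) (fa_smul a (fa_gen x)) \<in> KK n \<kappa>"
  unfolding U_fp_K_def by (rule fa_ideal.gen) blast
lemma K_rel3: "x \<in> g_fp n \<kappa> \<Longrightarrow> y \<in> g_fp n \<kappa> \<Longrightarrow> fa_sub (fa_comm (fa_gen x) (fa_gen y)) (fa_gen (aff_br (2*n) \<kappa> x y)) \<in> KK n \<kappa>"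
  unfolding U_fp_K_def by (rule fa_ideal.gen) blast
lemma K_zero: "fa_zero \<in> KK n \<kappa>"
  unfolding U_fp_K_def by (rule fa_ideal.zero)
lemma K_add: "x \<in> KK n \<kappa> \<Longrightarrow> y \<in> KK n \<kappa> \<Longrightarrow> fa_add x y \<in> KK n \<kappa>"
  unfolding U_fp_K_def by (rule fa_ideal.add)
lemma K_smul: "x \<in> KK n \<kappa> \<Longrightarrow> fa_smul a x \<in> KK n \<kappa>"
  unfolding U_fp_K_def by (rule fa_ideal.smul)
lemma K_lmul: "x \<in> KK n \<kappa> \<Longrightarrow> p \<in> FA (g_fp n \<kappa>) \<Longrightarrow> fa_mul p x \<in> KK n \<kappa>"
  unfolding U_fp_K_def by (rule fa_ideal.lmul)
lemma K_rmul: "x \<in> KK n \<kappa> \<Longrightarrow> p \<in> FA (g_fp n \<kappa>) \<Longrightarrow> fa_mul x p \<in> KK n \<kappa>"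
  unfolding U_fp_K_def by (rule fa_ideal.rmul)
lemma K_sub: "x \<in> KK n \<kappa> \<Longrightarrow> y \<in> KK n \<kappa> \<Longrightarrow> fa_sub x y \<in> KK n \<kappa>"
  by (simp add: fa_sub_eq K_add K_smul)
lemma K_self: "fa_sub x x \<in> KK n \<kappa>"
proof -
  have "fa_sub x x = fa_zero" by (simp add: fa_sub_def fa_zero_def fun_eq_iff)
  then show ?thesis by (simp add: K_zero)
qed

lemma zaff_in: "n \<ge> 1 \<Longrightarrow> zaff \<in> g_fp n \<kappa>"
proof -
  assume n: "n \<ge> 1"
  then have "hat_e n 1 \<in> g_fp n \<kappa>" using hat_in[of 1 n] by auto
  then have "aff_smul 0 (hat_e n 1) \<in> g_fp n \<kappa>" by (simp add: g_fp_def aff_lie_span.smul)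
  moreover have "aff_smul 0 (hat_e n 1) = zaff" by (simp add: aff_smul_def zaff_def)
  ultimately show ?thesis by simp
qed

lemma gen_zaff_K: "n \<ge> 1 \<Longrightarrow> fa_gen zaff \<in> KK n \<kappa>"
proof -
  assume n: "n \<ge> 1"
  have "fa_sub (fa_gen (aff_add zaff zaff)) (fa_add (fa_gen zaff) (fa_gen zaff)) \<in> KK n \<kappa>"
    by (rule K_rel1[OF zaff_in[OF n] zaff_in[OF n]])
  then have "fa_smul (-1) (fa_sub (fa_gen (aff_add zaff zaff)) (fa_add (fa_gen zaff) (fa_gen zaff))) \<in> KK n \<kappa>"
    by (rule K_smul)
  moreover have "aff_add zaff zaff = zaff" by (simp add: aff_add_def zaff_def madd_def)
  ultimately show ?thesis by (simp add: fa_smul_def fa_sub_def fa_add_def)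
qed

lemma sig_in: "g \<in> gim_gens n \<Longrightarrow> sig n \<kappa> g \<in> g_fp n \<kappa>"
  unfolding sig_def by (rule psi_gfp[OF gen_L])

lemma Phi_B:
  assumes p: "p \<in> FA (gim_gens n)"
  shows "PhiG n \<kappa> p \<in> FA (g_fp n \<kappa>)"
proof -
  have ex: "\<exists>w\<in>supp p. map (sig n \<kappa>) w = v" if "PhiG n \<kappa> p v \<noteq> 0" for v
  proof (rule ccontr)
    assume "\<not> ?thesis"
    then have "PhiG n \<kappa> p v = 0" unfolding PhiG_def lin_def by (auto intro!: sum.neutral)
    then show False using that by simp
  qed
  have fin: "finite {v. PhiG n \<kappa> p v \<noteq> 0}"
    by (rule finite_subset[of _ "map (sig n \<kappa>) ` supp p"]) (use ex FA_fin[OF p] in auto)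
  have "set v \<subseteq> g_fp n \<kappa>" if nz: "PhiG n \<kappa> p v \<noteq> 0" for v
  proof -
    obtain w where w: "w \<in> supp p" "map (sig n \<kappa>) w = v" using ex[OF nz] by blast
    then have "set w \<subseteq> gim_gens n" using p by (auto simp: FA_def supp_def)
    then have "\<forall>g\<in>set w. sig n \<kappa> g \<in> g_fp n \<kappa>" using sig_in by blast
    then show ?thesis using w(2) by auto
  qed
  then show ?thesis using fin by (simp add: FA_def)
qed

lemma Phi_psi:
  assumes x: "x \<in> gim_FL n"
  shows "fa_sub (PhiG n \<kappa> x) (fa_gen (psiG n \<kappa> x)) \<in> KK n \<kappa>"
  using x unfolding gim_FL_def
proof (induction rule: fa_lie_span.induct)
  case (gen s)
  then obtain g where "s = fa_gen g" by auto
  then show ?case by (simp add: Phi_gen sig_def K_self)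
next
  case (add x y)
  let ?dx = "fa_sub (PhiG n \<kappa> x) (fa_gen (psiG n \<kappa> x))" and ?dy = "fa_sub (PhiG n \<kappa> y) (fa_gen (psiG n \<kappa> y))"
  have f: "finite (supp x)" "finite (supp y)" using add by (auto intro: FA_fin span_FA)
  have inx: "psiG n \<kappa> x \<in> g_fp n \<kappa>" "psiG n \<kappa> y \<in> g_fp n \<kappa>" using add psi_gfp by (auto simp: gim_FL_def)
  have R: "fa_sub (fa_gen (aff_add (psiG n \<kappa> x) (psiG n \<kappa> y))) (fa_add (fa_gen (psiG n \<kappa> x)) (fa_gen (psiG n \<kappa> y))) \<in> KK n \<kappa>"
    using inx by (rule K_rel1)
  have "fa_sub (PhiG n \<kappa> (fa_add x y)) (fa_gen (psiG n \<kappa> (fa_add x y)))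
      = fa_sub (fa_add ?dx ?dy) (fa_sub (fa_gen (aff_add (psiG n \<kappa> x) (psiG n \<kappa> y))) (fa_add (fa_gen (psiG n \<kappa> x)) (fa_gen (psiG n \<kappa> y))))"
    by (simp only: Phi_add[OF f] psiG_add[OF f]) (simp add: fa_sub_def fa_add_def fun_eq_iff)
  then show ?case using add R by (simp add: K_sub K_add)
next
  case (smul x a)
  let ?dx = "fa_sub (PhiG n \<kappa> x) (fa_gen (psiG n \<kappa> x))"
  have f: "finite (supp x)" using smul by (auto intro: FA_fin span_FA)
  have inx: "psiG n \<kappa> x \<in> g_fp n \<kappa>" using smul psi_gfp by (auto simp: gim_FL_def)
  have R: "fa_sub (fa_gen (aff_smul a (psiG n \<kappa> x))) (fa_smul a (fa_gen (psiG n \<kappa> x))) \<in> KK n \<kappa>"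
    using inx by (rule K_rel2)
  have "fa_sub (PhiG n \<kappa> (fa_smul a x)) (fa_gen (psiG n \<kappa> (fa_smul a x)))
      = fa_sub (fa_smul a ?dx) (fa_sub (fa_gen (aff_smul a (psiG n \<kappa> x))) (fa_smul a (fa_gen (psiG n \<kappa> x))))"
    by (simp only: Phi_smul[OF f] psiG_smul[OF f]) (simp add: fa_sub_def fa_smul_def fun_eq_iff algebra_simps)
  then show ?case using smul R by (simp add: K_sub K_smul)
next
  case (comm x y)
  let ?Px = "PhiG n \<kappa> x" and ?Py = "PhiG n \<kappa> y"
  let ?gx = "fa_gen (psiG n \<kappa> x)" and ?gy = "fa_gen (psiG n \<kappa> y)"
  let ?dx = "fa_sub ?Px ?gx" and ?dy = "fa_sub ?Py ?gy"
  have FAx: "x \<in> FA (gim_gens n)" "y \<in> FA (gim_gens n)" using comm by (auto intro: span_FA)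
  then have f: "finite (supp x)" "finite (supp y)" by (auto intro: FA_fin)
  have inx: "psiG n \<kappa> x \<in> g_fp n \<kappa>" "psiG n \<kappa> y \<in> g_fp n \<kappa>" using comm psi_gfp by (auto simp: gim_FL_def)
  have B: "?Px \<in> FA (g_fp n \<kappa>)" "?Py \<in> FA (g_fp n \<kappa>)" "?gx \<in> FA (g_fp n \<kappa>)" "?gy \<in> FA (g_fp n \<kappa>)"
    using FAx inx by (auto intro: Phi_B FA_gen)
  have R: "fa_sub (fa_comm ?gx ?gy) (fa_gen (aff_br (2*n) \<kappa> (psiG n \<kappa> x) (psiG n \<kappa> y))) \<in> KK n \<kappa>"
    using inx by (rule K_rel3)
  have eq: "fa_sub (PhiG n \<kappa> (fa_comm x y)) (fa_gen (psiG n \<kappa> (fa_comm x y)))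
      = fa_add (fa_add (fa_add (fa_mul ?gx ?dy) (fa_mul ?dx ?Py)) (fa_smul (-1) (fa_add (fa_mul ?gy ?dx) (fa_mul ?dy ?Px))))
          (fa_sub (fa_comm ?gx ?gy) (fa_gen (aff_br (2*n) \<kappa> (psiG n \<kappa> x) (psiG n \<kappa> y))))"
  proof -
    have fm: "finite (supp (fa_mul x y))" "finite (supp (fa_mul y x))" using f by (simp_all add: finite_supp_mul)
    show ?thesis
    apply (subst psiG_comm[OF f])
    apply (simp only: fa_comm_def Phi_sub[OF fm] Phi_mul[OF f] Phi_mul[OF f(2) f(1)])
    apply (simp add: fa_mul_def fa_sub_def fa_add_def fa_smul_def fun_eq_iff algebra_simps sum.distrib sum_subtractf sum_distrib_left sum_negf)
    done
  qed
  show ?case unfolding eq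
    by (intro K_add K_smul K_lmul K_rmul R B comm.IH)
qed

lemma L_fin: "x \<in> gim_FL n \<Longrightarrow> finite (supp x)"
  by (rule FA_fin[OF L_FA])

lemma J_FA: "x \<in> gim_J n \<Longrightarrow> x \<in> FA (gim_gens n)"
  unfolding gim_J_def
  by (induction rule: fa_ideal.induct) (auto intro: L_FA rels_L FA_zero FA_add FA_smul FA_mul)

lemma Phi_J:
  assumes n: "n \<ge> 3" and x: "x \<in> gim_J n"
  shows "PhiG n \<kappa> x \<in> KK n \<kappa>"
proof -
  have "x \<in> fa_ideal (FA (gim_gens n)) (gim_rels n)" using x by (simp add: gim_J_def)
  then show ?thesis
  proof (induction rule: fa_ideal.induct)
    case (gen r)
    have rL: "r \<in> gim_FL n" using gen by (rule rels_L)
    have "fa_sub (PhiG n \<kappa> r) (fa_gen (psiG n \<kappa> r)) \<in> KK n \<kappa>" using rL by (rule Phi_psi)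
    moreover have "psiG n \<kappa> r = zaff" using n gen by (rule rels_psi)
    ultimately have "fa_add (fa_sub (PhiG n \<kappa> r) (fa_gen zaff)) (fa_gen zaff) \<in> KK n \<kappa>"
      using gen_zaff_K n by (auto intro: K_add)
    then show ?case by (simp add: fa_add_def fa_sub_def)
  next
    case zero then show ?case by (simp add: Phi_zero K_zero)
  next
    case (add x y)
    have "x \<in> FA (gim_gens n)" "y \<in> FA (gim_gens n)" using add(1,2) by (auto simp: gim_J_def intro: J_FA)
    then show ?case using add by (simp add: Phi_add FA_fin K_add)
  next
    case (smul x a)
    have "x \<in> FA (gim_gens n)" using smul(1) by (auto simp: gim_J_def intro: J_FA)
    then show ?case using smul by (simp add: Phi_smul FA_fin K_smul)
  next
    case (lmul x p)
    have "x \<in> FA (gim_gens n)" using lmul(1) by (auto simp: gim_J_def intro: J_FA)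
    then show ?case using lmul by (simp add: Phi_mul FA_fin K_lmul Phi_B)
  next
    case (rmul x p)
    have "x \<in> FA (gim_gens n)" using rmul(1) by (auto simp: gim_J_def intro: J_FA)
    then show ?case using rmul by (simp add: Phi_mul FA_fin K_rmul Phi_B)
  qed
qed

theorem proposition4p1:
  fixes n :: nat and \<kappa> :: complex
  assumes "n \<ge> 3" and "\<kappa> \<noteq> 0"
  shows "\<exists>\<Phi> \<psi>.
     assoc_hom_quot (FA (gim_gens n)) (gim_J n) (FA (g_fp n \<kappa>)) (U_fp_K n \<kappa>) \<Phi> \<and>
     (\<forall>i\<in>{1..n}. fa_sub (\<Phi> (fa_gen (GE i))) (fa_gen (hat_e n i)) \<in> U_fp_K n \<kappa>
                 \<and> fa_sub (\<Phi> (fa_gen (GF i))) (fa_gen (hat_f n i)) \<in> U_fp_K n \<kappa>) \<and>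
     lie_hom_quot (gim_FL n) (gim_I n) (2*n) \<kappa> \<psi> \<and>
     (\<forall>x\<in>gim_FL n. \<psi> x \<in> g_fp n \<kappa>) \<and>
     (\<forall>i\<in>{1..n}. \<psi> (fa_gen (GE i)) = hat_e n i \<and> \<psi> (fa_gen (GF i)) = hat_f n i) \<and>
     (\<forall>x\<in>gim_FL n. fa_sub (\<Phi> x) (fa_gen (\<psi> x)) \<in> U_fp_K n \<kappa>)"
proof (intro exI conjI)
  note n = assms(1)
  show "assoc_hom_quot (FA (gim_gens n)) (gim_J n) (FA (g_fp n \<kappa>)) (U_fp_K n \<kappa>) (PhiG n \<kappa>)"
    unfolding assoc_hom_quot_def
    by (auto simp: Phi_B Phi_J[OF n] Phi_add Phi_smul Phi_mul Phi_one FA_fin K_self)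
  show "\<forall>i\<in>{1..n}. fa_sub (PhiG n \<kappa> (fa_gen (GE i))) (fa_gen (hat_e n i)) \<in> U_fp_K n \<kappa>
                 \<and> fa_sub (PhiG n \<kappa> (fa_gen (GF i))) (fa_gen (hat_f n i)) \<in> U_fp_K n \<kappa>"
    by (simp add: Phi_gen sig_def psiG_e psiG_f K_self)
  show "lie_hom_quot (gim_FL n) (gim_I n) (2*n) \<kappa> (psiG n \<kappa>)"
    unfolding lie_hom_quot_def
    by (auto simp: psiG_add psiG_smul psiG_comm L_fin I_zero[OF n] zaff_def)
  show "\<forall>x\<in>gim_FL n. psiG n \<kappa> x \<in> g_fp n \<kappa>" by (simp add: psi_gfp)
  show "\<forall>i\<in>{1..n}. psiG n \<kappa> (fa_gen (GE i)) = hat_e n i \<and> psiG n \<kappa> (fa_gen (GF i)) = hat_f n i"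
    by (simp add: psiG_e psiG_f)
  show "\<forall>x\<in>gim_FL n. fa_sub (PhiG n \<kappa> x) (fa_gen (psiG n \<kappa> x)) \<in> U_fp_K n \<kappa>"
    by (simp add: Phi_psi)
qed


end
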